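(* Let $f\colon G\to H$ and $g\colon G\to K$ be graph maps. (1) For integers $p\ge0$ and $q_1,q_2\ge1$, the commutative square \[\begin{array}{ccc} G\square I_p&\xrightarrow{\ r_p(f,\mathrm{id})\ }&\mathrm{Cyl}_{p+q_1}(f,\mathrm{id}_G)\\ {\scriptstyle \ell_p(\mathrm{id},g)}\downarrow&&\downarrow{\scriptstyle \ell_{p+q_1}(f,g)}\\ \mathrm{Cyl}_{p+q_2}(\mathrm{id}_G,g)&\xrightarrow{\ r_{p+q_2}(f,g)\ }&\mathrm{Cyl}_{p+q_1+q_2}(f,g)\end{array}\] is a $(p+1)$-skeletal pushout. (2) If $f$ is injective, (1) also holds when $q_1=0$. (3) If $g$ is injective, (1) also holds when $q_2=0$.
   Context: Graphs are sets with a reflexive symmetric relation; graph maps preserve it. $I_m$ has vertices $0,\dots,m$ and edges $i\sim i+1$; $G\square H$ has vertex set $V(G)\times V(H)$ and $(v,w)\sim(v',w')$ iff ($v=v'$, $w\sim w'$) or ($v\sim v'$, $w=w'$). For $f\colon G\to H$, $g\colon G\to K$, $\mathrm{Cyl}_m(f,g)$ is the quotient of $H\sqcup(G\square I_m)\sqcup K$ by $(v,0)\sim f(v)$, $(v,m)\sim g(v)$ (a colimit in graphs); in particular $\mathrm{Cyl}_p(\mathrm{id}_G,\mathrm{id}_G)\cong G\square I_p$. For $0\le k\le m$: $\ell_k(f,g)\colon\mathrm{Cyl}_k(f,\mathrm{id}_G)\to\mathrm{Cyl}_m(f,g)$ is the identity on $H$ and sends $(v,t)\mapsto(v,t)$;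 $r_k(f,g)\colon\mathrm{Cyl}_k(\mathrm{id}_G,g)\to\mathrm{Cyl}_m(f,g)$ is the identity on $K$ and sends $(v,t)\mapsto(v,t+m-k)$. The $1$-nerve $N_1G$ is the cubical set (presheaf on the box category with faces, degeneracies and connections) whose $k$-cubes are graph maps $I_1^{\square k}\to G$; $\operatorname{sk}^n$ is the subobject generated by cubes of dimension $\le n$. A commutative square of graphs is an $n$-skeletal pushout if applying $\operatorname{sk}^n\circ N_1$ yields a pushout of cubical sets. *)

theory Defs
  imports Main
begin

record 'a graph =
  verts :: "'a set"
  edge  :: "'a \<Rightarrow> 'a \<Rightarrow> bool"

definition is_graph :: "'a graph \<Rightarrow> bool" where
  "is_graph G \<longleftrightarrow> (\<forall>x\<in>verts G. edge G x x) \<and> (\<forall>x y. edge G x y \<longrightarrow> edge G y x)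
     \<and> (\<forall>x y. edge G x y \<longrightarrow> x \<in> verts G \<and> y \<in> verts G)"

definition graph_map :: "'a graph \<Rightarrow> 'b graph \<Rightarrow> ('a \<Rightarrow> 'b) \<Rightarrow> bool" where
  "graph_map G H f \<longleftrightarrow> (\<forall>x\<in>verts G. f x \<in> verts H)
     \<and> (\<forall>x y. edge G x y \<longrightarrow> edge H (f x) (f y))"

definition interval :: "nat \<Rightarrow> nat graph" where
  "interval m = \<lparr> verts = {0..m},
     edge = (\<lambda>i j. i \<le> m \<and> j \<le> m \<and> (i = j \<or> i = Suc j \<or> j = Suc i)) \<rparr>"

definition box :: "'a graph \<Rightarrow> 'b graph \<Rightarrow> ('a \<times> 'b) graph" where
  "box G H = \<lparr> verts = verts G \<times> verts H,
     edge = (\<lambda>(v,w) (v',w'). (v = v' \<and> v \<in> verts G \<and> edge H w w')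
                            \<or> (edge G v v' \<and> w = w' \<and> w \<in> verts H)) \<rparr>"

text \<open>Quotient of a graph by the equivalence relation generated by R (colimit in graphs):
  vertices are equivalence classes, two classes are adjacent iff they have adjacent representatives.\<close>
definition gen_eqv :: "'a set \<Rightarrow> ('a \<times> 'a) set \<Rightarrow> ('a \<times> 'a) set" where
  "gen_eqv U R = (R \<union> R\<inverse>)\<^sup>* \<inter> (U \<times> U)"

definition quot_graph :: "'a graph \<Rightarrow> ('a \<times> 'a) set \<Rightarrow> 'a set graph" where
  "quot_graph U R = \<lparr> verts = verts U // gen_eqv (verts U) R,
     edge = (\<lambda>X Y. X \<in> verts U // gen_eqv (verts U) R \<and> Y \<in> verts U // gen_eqv (verts U) R
                   \<and> (\<exists>x\<in>X. \<exists>y\<in>Y. edge U x y)) \<rparr>"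

definition cyl_pre :: "'g graph \<Rightarrow> 'h graph \<Rightarrow> 'k graph \<Rightarrow> nat \<Rightarrow> ('h + ('g \<times> nat) + 'k) graph" where
  "cyl_pre G H K m = \<lparr> verts = Inl ` verts H \<union> Inr ` Inl ` verts (box G (interval m)) \<union> Inr ` Inr ` verts K,
     edge = (\<lambda>u v. case (u, v) of
               (Inl a, Inl b) \<Rightarrow> edge H a b
             | (Inr (Inl a), Inr (Inl b)) \<Rightarrow> edge (box G (interval m)) a b
             | (Inr (Inr a), Inr (Inr b)) \<Rightarrow> edge K a b
             | _ \<Rightarrow> False) \<rparr>"

definition cyl_rel :: "'g graph \<Rightarrow> ('g \<Rightarrow> 'h) \<Rightarrow> ('g \<Rightarrow> 'k) \<Rightarrow> nat \<Rightarrow> (('h + ('g \<times> nat) + 'k) \<times> ('h + ('g \<times> nat) + 'k)) set" where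
  "cyl_rel G f g m = {(Inr (Inl (v, 0)), Inl (f v)) | v. v \<in> verts G}
                    \<union> {(Inr (Inl (v, m)), Inr (Inr (g v))) | v. v \<in> verts G}"

definition cyl :: "'g graph \<Rightarrow> 'h graph \<Rightarrow> 'k graph \<Rightarrow> ('g \<Rightarrow> 'h) \<Rightarrow> ('g \<Rightarrow> 'k) \<Rightarrow> nat
    \<Rightarrow> ('h + ('g \<times> nat) + 'k) set graph" where
  "cyl G H K f g m = quot_graph (cyl_pre G H K m) (cyl_rel G f g m)"

definition cyl_cls :: "'g graph \<Rightarrow> 'h graph \<Rightarrow> 'k graph \<Rightarrow> ('g \<Rightarrow> 'h) \<Rightarrow> ('g \<Rightarrow> 'k) \<Rightarrow> nat
    \<Rightarrow> ('h + ('g \<times> nat) + 'k) \<Rightarrow> ('h + ('g \<times> nat) + 'k) set" where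
  "cyl_cls G H K f g m x = gen_eqv (verts (cyl_pre G H K m)) (cyl_rel G f g m) `` {x}"

text \<open>l_k(f,g) : Cyl_k(f, id_G) \<rightarrow> Cyl_m(f,g): identity on H, (v,t) \<mapsto> (v,t)
  (and hence the copy of G at the far end, identified with (v,k), goes to (v,k)).\<close>
definition lmap :: "'g graph \<Rightarrow> 'h graph \<Rightarrow> 'k graph \<Rightarrow> ('g \<Rightarrow> 'h) \<Rightarrow> ('g \<Rightarrow> 'k) \<Rightarrow> nat \<Rightarrow> nat
    \<Rightarrow> ('h + ('g \<times> nat) + 'g) set \<Rightarrow> ('h + ('g \<times> nat) + 'k) set" where
  "lmap G H K f g k m X = cyl_cls G H K f g m
     (case (SOME x. x \<in> X) of
        Inl h \<Rightarrow> Inl h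
      | Inr (Inl (v, t)) \<Rightarrow> Inr (Inl (v, t))
      | Inr (Inr v) \<Rightarrow> Inr (Inl (v, k)))"

text \<open>r_k(f,g) : Cyl_k(id_G, g) \<rightarrow> Cyl_m(f,g): identity on K, (v,t) \<mapsto> (v,t+m-k)
  (and hence the copy of G at the near end, identified with (v,0), goes to (v,m-k)).\<close>
definition rmap :: "'g graph \<Rightarrow> 'h graph \<Rightarrow> 'k graph \<Rightarrow> ('g \<Rightarrow> 'h) \<Rightarrow> ('g \<Rightarrow> 'k) \<Rightarrow> nat \<Rightarrow> nat
    \<Rightarrow> ('g + ('g \<times> nat) + 'k) set \<Rightarrow> ('h + ('g \<times> nat) + 'k) set" where
  "rmap G H K f g k m X = cyl_cls G H K f g m
     (case (SOME x. x \<in> X) of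
        Inl v \<Rightarrow> Inr (Inl (v, m - k))
      | Inr (Inl (v, t)) \<Rightarrow> Inr (Inl (v, t + (m - k)))
      | Inr (Inr w) \<Rightarrow> Inr (Inr w))"

text \<open>The isomorphism G box I_p \<cong> Cyl_p(id_G, id_G).\<close>
definition cyl_incl :: "'g graph \<Rightarrow> nat \<Rightarrow> ('g \<times> nat) \<Rightarrow> ('g + ('g \<times> nat) + 'g) set" where
  "cyl_incl G p vt = cyl_cls G G G id id p (Inr (Inl vt))"

text \<open>I_1^{box k}, with vertex set the boolean lists of length k.\<close>
definition cube_graph :: "nat \<Rightarrow> bool list graph" where
  "cube_graph k = \<lparr> verts = {x. length x = k},
     edge = (\<lambda>x y. length x = k \<and> length y = k \<and> card {i. i < k \<and> x ! i \<noteq> y ! i} \<le> 1) \<rparr>"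

text \<open>k-cubes of N_1 G: graph maps I_1^{box k} \<rightarrow> G (extensional: undefined off the vertex set).\<close>
definition cubes :: "'a graph \<Rightarrow> nat \<Rightarrow> (bool list \<Rightarrow> 'a) set" where
  "cubes G k = {c. graph_map (cube_graph k) G c \<and> (\<forall>x. length x \<noteq> k \<longrightarrow> c x = undefined)}"

definition insert_at :: "nat \<Rightarrow> bool \<Rightarrow> bool list \<Rightarrow> bool list" where
  "insert_at i e x = take i x @ [e] @ drop i x"

definition remove_at :: "nat \<Rightarrow> bool list \<Rightarrow> bool list" where
  "remove_at i x = take i x @ drop (Suc i) x"

definition connect_at :: "nat \<Rightarrow> (bool \<Rightarrow> bool \<Rightarrow> bool) \<Rightarrow> bool list \<Rightarrow> bool list" where
  "connect_at i op x = take i x @ [op (x ! i) (x ! Suc i)] @ drop (Suc (Suc i)) x"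

text \<open>Morphisms [1]^k \<rightarrow> [1]^m of the box category with connections:
  composites of faces, degeneracies and connections (max and min).\<close>
inductive boxmor :: "nat \<Rightarrow> nat \<Rightarrow> (bool list \<Rightarrow> bool list) \<Rightarrow> bool" where
  bid: "boxmor k k id"
| bface: "boxmor k n \<theta> \<Longrightarrow> i \<le> n \<Longrightarrow> boxmor k (Suc n) (insert_at i e \<circ> \<theta>)"
| bdegen: "boxmor k (Suc n) \<theta> \<Longrightarrow> i \<le> n \<Longrightarrow> boxmor k n (remove_at i \<circ> \<theta>)"
| bconn_max: "boxmor k (Suc (Suc n)) \<theta> \<Longrightarrow> i \<le> n \<Longrightarrow> boxmor k (Suc n) (connect_at i (\<or>) \<circ> \<theta>)"
| bconn_min: "boxmor k (Suc (Suc n)) \<theta> \<Longrightarrow> i \<le> n \<Longrightarrow> boxmor k (Suc n) (connect_at i (\<and>) \<circ> \<theta>)"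

text \<open>k-cubes of sk^n N_1 G: those obtained from cubes of dimension \<le> n by a structure map.\<close>
definition skcubes :: "nat \<Rightarrow> 'a graph \<Rightarrow> nat \<Rightarrow> (bool list \<Rightarrow> 'a) set" where
  "skcubes n G k = {c \<in> cubes G k. \<exists>m \<theta> d. m \<le> n \<and> boxmor k m \<theta> \<and> d \<in> cubes G m
                       \<and> (\<forall>x. length x = k \<longrightarrow> c x = d (\<theta> x))}"

definition postc :: "nat \<Rightarrow> ('a \<Rightarrow> 'b) \<Rightarrow> (bool list \<Rightarrow> 'a) \<Rightarrow> (bool list \<Rightarrow> 'b)" where
  "postc k \<phi> c = (\<lambda>x. if length x = k then \<phi> (c x) else undefined)"

text \<open>A commutative square of sets A \<rightarrow> B (a), A \<rightarrow> C (b), B \<rightarrow> D (c), C \<rightarrow> D (d) is a pushout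
  iff the induced map from (B + C) modulo the equivalence generated by a x ~ b x to D is bijective.\<close>
definition pushout_set :: "'a set \<Rightarrow> 'b set \<Rightarrow> 'c set \<Rightarrow> 'd set
    \<Rightarrow> ('a \<Rightarrow> 'b) \<Rightarrow> ('a \<Rightarrow> 'c) \<Rightarrow> ('b \<Rightarrow> 'd) \<Rightarrow> ('c \<Rightarrow> 'd) \<Rightarrow> bool" where
  "pushout_set A B C D a b c d \<longleftrightarrow>
     (\<forall>x\<in>A. a x \<in> B \<and> b x \<in> C \<and> c (a x) = d (b x))
   \<and> (\<forall>y\<in>B. c y \<in> D) \<and> (\<forall>z\<in>C. d z \<in> D)
   \<and> (\<forall>w\<in>D. \<exists>u\<in>B <+> C. case_sum c d u = w)
   \<and> (\<forall>u\<in>B <+> C. \<forall>v\<in>B <+> C. case_sum c d u = case_sum c d v \<longrightarrow>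
        (u, v) \<in> ({(Inl (a x), Inr (b x)) | x. x \<in> A} \<union> {(Inl (a x), Inr (b x)) | x. x \<in> A}\<inverse>)\<^sup>*)"

text \<open>A square of graphs is an n-skeletal pushout if sk^n N_1 turns it into a pushout of
  cubical sets; colimits of presheaves are computed dimensionwise.\<close>
definition skel_pushout :: "nat \<Rightarrow> 'a graph \<Rightarrow> 'b graph \<Rightarrow> 'c graph \<Rightarrow> 'd graph
    \<Rightarrow> ('a \<Rightarrow> 'b) \<Rightarrow> ('a \<Rightarrow> 'c) \<Rightarrow> ('b \<Rightarrow> 'd) \<Rightarrow> ('c \<Rightarrow> 'd) \<Rightarrow> bool" where
  "skel_pushout n A B C D a b c d \<longleftrightarrow>
     (\<forall>k. pushout_set (skcubes n A k) (skcubes n B k) (skcubes n C k) (skcubes n D k)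
            (postc k a) (postc k b) (postc k c) (postc k d))"

definition cyl_square :: "'g graph \<Rightarrow> 'h graph \<Rightarrow> 'k graph \<Rightarrow> ('g \<Rightarrow> 'h) \<Rightarrow> ('g \<Rightarrow> 'k)
    \<Rightarrow> nat \<Rightarrow> nat \<Rightarrow> nat \<Rightarrow> bool" where
  "cyl_square G H K f g p q1 q2 \<longleftrightarrow>
     skel_pushout (Suc p)
       (box G (interval p)) (cyl G H G f id (p + q1)) (cyl G G K id g (p + q2)) (cyl G H K f g (p + q1 + q2))
       (rmap G H G f id p (p + q1) \<circ> cyl_incl G p)
       (lmap G G K id g p (p + q2) \<circ> cyl_incl G p)
       (lmap G H K f g (p + q1) (p + q1 + q2))
       (rmap G H K f g (p + q2) (p + q1 + q2))"

end

theory Submission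
  imports Defs
begin

lemma cedge_iff:
  "edge (cube_graph k) x y \<longleftrightarrow> length x = k \<and> length y = k \<and>
     (\<forall>i j. i < k \<longrightarrow> j < k \<longrightarrow> x!i \<noteq> y!i \<longrightarrow> x!j \<noteq> y!j \<longrightarrow> i = j)"
proof -
  have "finite {i. i < k \<and> x ! i \<noteq> y ! i}" by simp
  then show ?thesis
    unfolding cube_graph_def by (auto simp: card_le_Suc0_iff_eq)
qed

lemma cverts[simp]: "verts (cube_graph k) = {x. length x = k}"
  by (simp add: cube_graph_def)

lemma insert_at_len[simp]: "i \<le> length x \<Longrightarrow> length (insert_at i e x) = Suc (length x)"
  by (simp add: insert_at_def)

lemma insert_at_nth:
  "i \<le> length x \<Longrightarrow> j \<le> length x \<Longrightarrow>
   insert_at i e x ! j = (if j < i then x!j else if j = i then e else x!(j - 1))"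
  by (auto simp: insert_at_def nth_append min_def)

lemma remove_at_len[simp]: "i < length x \<Longrightarrow> length (remove_at i x) = length x - 1"
  by (simp add: remove_at_def)

lemma remove_at_nth:
  "i < length x \<Longrightarrow> j < length x - 1 \<Longrightarrow>
   remove_at i x ! j = (if j < i then x!j else x!(Suc j))"
  by (auto simp: remove_at_def nth_append min_def)

lemma connect_at_len[simp]: "Suc i < length x \<Longrightarrow> length (connect_at i op x) = length x - 1"
  by (simp add: connect_at_def)

lemma connect_at_nth:
  "Suc i < length x \<Longrightarrow> j < length x - 1 \<Longrightarrow>
   connect_at i op x ! j = (if j < i then x!j else if j = i then op (x!i) (x!Suc i) else x!(Suc j))"
  by (auto simp: connect_at_def nth_append min_def)

lemma boxmor_len: "boxmor k m \<theta> \<Longrightarrow> length x = k \<Longrightarrow> length (\<theta> x) = m"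
  by (induction arbitrary: x rule: boxmor.induct) auto

lemma edge_transfer:
  assumes "edge (cube_graph n) x y" "length x' = m" "length y' = m"
    and src: "\<And>j. j < m \<Longrightarrow> x'!j \<noteq> y'!j \<Longrightarrow> \<exists>a<n. a \<in> S j \<and> x!a \<noteq> y!a"
    and disj: "\<And>j j' a. j \<noteq> j' \<Longrightarrow> a \<in> S j \<Longrightarrow> a \<in> S j' \<Longrightarrow> False"
  shows "edge (cube_graph m) x' y'"
  unfolding cedge_iff
proof (intro conjI allI impI)
  fix a b assume "a < m" "b < m" "x'!a \<noteq> y'!a" "x'!b \<noteq> y'!b"
  then obtain a1 b1 where "a1 < n" "a1 \<in> S a" "x!a1 \<noteq> y!a1" "b1 < n" "b1 \<in> S b" "x!b1 \<noteq> y!b1"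
    using src by meson
  moreover have "a1 = b1" using assms(1) calculation by (auto simp: cedge_iff)
  ultimately show "a = b" using disj by blast
qed (use assms in auto)

lemma insert_at_edge:
  assumes "edge (cube_graph n) x y" "i \<le> n"
  shows "edge (cube_graph (Suc n)) (insert_at i e x) (insert_at i e y)"
proof -
  have l: "length x = n" "length y = n" using assms by (auto simp: cedge_iff)
  show ?thesis
  proof (rule edge_transfer[OF assms(1), where S="\<lambda>j. if j < i then {j} else if j = i then {} else {j - 1}"])
    fix j assume "j < Suc n" "insert_at i e x ! j \<noteq> insert_at i e y ! j"
    then show "\<exists>a<n. a \<in> (if j < i then {j} else if j = i then {} else {j - 1}) \<and> x ! a \<noteq> y ! a"
      using l assms(2) by (auto simp: insert_at_nth split: if_splits)
  qed (use l assms in \<open>auto split: if_splits\<close>)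
qed

lemma remove_at_edge:
  assumes "edge (cube_graph (Suc n)) x y" "i \<le> n"
  shows "edge (cube_graph n) (remove_at i x) (remove_at i y)"
proof -
  have l: "length x = Suc n" "length y = Suc n" using assms by (auto simp: cedge_iff)
  show ?thesis
  proof (rule edge_transfer[OF assms(1), where S="\<lambda>j. if j < i then {j} else {Suc j}"])
    fix j assume "j < n" "remove_at i x ! j \<noteq> remove_at i y ! j"
    then show "\<exists>a<Suc n. a \<in> (if j < i then {j} else {Suc j}) \<and> x ! a \<noteq> y ! a"
      using l assms(2) by (auto simp: remove_at_nth split: if_splits)
  qed (use l assms in \<open>auto split: if_splits\<close>)
qed

lemma connect_at_edge:
  assumes "edge (cube_graph (Suc (Suc n))) x y" "i \<le> n"
  shows "edge (cube_graph (Suc n)) (connect_at i op x) (connect_at i op y)"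
proof -
  have l: "length x = Suc (Suc n)" "length y = Suc (Suc n)" using assms by (auto simp: cedge_iff)
  show ?thesis
  proof (rule edge_transfer[OF assms(1), where S="\<lambda>j. if j < i then {j} else if j = i then {i, Suc i} else {Suc j}"])
    fix j assume j: "j < Suc n" "connect_at i op x ! j \<noteq> connect_at i op y ! j"
    show "\<exists>a<Suc (Suc n). a \<in> (if j < i then {j} else if j = i then {i, Suc i} else {Suc j}) \<and> x ! a \<noteq> y ! a"
    proof (cases "j = i")
      case True
      then have "op (x!i) (x!Suc i) \<noteq> op (y!i) (y!Suc i)" using j l assms(2) by (simp add: connect_at_nth)
      then have "x!i \<noteq> y!i \<or> x!Suc i \<noteq> y!Suc i" by (cases "x!i = y!i"; cases "x!Suc i = y!Suc i") auto
      then show ?thesis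
      proof
        assume "x!i \<noteq> y!i" then show ?thesis using True assms(2) by (intro exI[of _ i]) simp
      next
        assume "x!Suc i \<noteq> y!Suc i" then show ?thesis using True assms(2) by (intro exI[of _ "Suc i"]) simp
      qed
    next
      case False
      then show ?thesis using j l assms(2) by (auto simp: connect_at_nth split: if_splits)
    qed
  qed (use l assms in \<open>auto split: if_splits\<close>)
qed

lemma boxmor_edge: "boxmor k m \<theta> \<Longrightarrow> edge (cube_graph k) x y \<Longrightarrow> edge (cube_graph m) (\<theta> x) (\<theta> y)"
proof (induction arbitrary: x y rule: boxmor.induct)
  case (bid k) then show ?case by simp
next
  case (bface k n \<theta> i e) then show ?case using insert_at_edge by auto
next
  case (bdegen k n \<theta> i) then show ?case using remove_at_edge by auto
next
  case (bconn_max k n \<theta> i) then show ?case using connect_at_edge by auto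
next
  case (bconn_min k n \<theta> i) then show ?case using connect_at_edge by auto
qed


definition the_or :: "bool option \<Rightarrow> bool \<Rightarrow> bool" where
  "the_or ob z = (case ob of None \<Rightarrow> z | Some b \<Rightarrow> b)"

definition inS :: "bool option list \<Rightarrow> bool list \<Rightarrow> bool" where
  "inS P x \<longleftrightarrow> length x = length P \<and> (\<forall>i<length P. the_or (P!i) (x!i) = x!i)"

definition proj :: "bool option list \<Rightarrow> bool list \<Rightarrow> bool list" where
  "proj P x = map (\<lambda>i. the_or (P!i) (x!i)) [0..<length P]"

lemma proj_len[simp]: "length (proj P x) = length P" by (simp add: proj_def)
lemma proj_nth[simp]: "i < length P \<Longrightarrow> proj P x ! i = the_or (P!i) (x!i)" by (simp add: proj_def)
lemma the_or_idem[simp]: "the_or ob (the_or ob z) = the_or ob z" by (simp add: the_or_def split: option.splits)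
lemma the_or_None[simp]: "the_or None z = z" by (simp add: the_or_def)
lemma the_or_Some[simp]: "the_or (Some b) z = b" by (simp add: the_or_def)

lemma inS_proj: "inS P x \<Longrightarrow> proj P x = x"
  by (auto simp: inS_def intro!: nth_equalityI)

lemma proj_edge: "edge (cube_graph (length P)) x y \<Longrightarrow> edge (cube_graph (length P)) (proj P x) (proj P y)"
  by (rule edge_transfer[where S="\<lambda>j. {j}"]) (auto simp: the_or_def split: option.splits)

definition sec_inv :: "nat \<Rightarrow> nat \<Rightarrow> (bool list \<Rightarrow> bool list) \<Rightarrow> bool option list \<Rightarrow> (bool list \<Rightarrow> bool list) \<Rightarrow> bool" where
  "sec_inv k m \<theta> P s \<longleftrightarrow> length P = m \<and> (\<forall>y. length y = k \<longrightarrow> inS P (\<theta> y))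
     \<and> (\<forall>x. length x = m \<longrightarrow> length (s x) = k)
     \<and> (\<forall>x y. edge (cube_graph m) x y \<longrightarrow> edge (cube_graph k) (s x) (s y))
     \<and> (\<forall>x. length x = m \<longrightarrow> \<theta> (s x) = proj P x)"

definition step_ok :: "nat \<Rightarrow> nat \<Rightarrow> (bool list \<Rightarrow> bool list) \<Rightarrow> bool option list \<Rightarrow> bool option list \<Rightarrow> (bool list \<Rightarrow> bool list) \<Rightarrow> bool" where
  "step_ok n n' \<sigma> P0 P' t \<longleftrightarrow> length P' = n'
     \<and> (\<forall>x. length x = n' \<longrightarrow> length (t x) = n)
     \<and> (\<forall>x y. edge (cube_graph n') x y \<longrightarrow> edge (cube_graph n) (t x) (t y))
     \<and> (\<forall>x. length x = n' \<longrightarrow> \<sigma> (proj P0 (t x)) = proj P' x)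
     \<and> (\<forall>w. inS P0 w \<longrightarrow> inS P' (\<sigma> w))"

lemma step_combine:
  assumes "sec_inv k n \<theta> P0 s0" "step_ok n n' \<sigma> P0 P' t"
  shows "sec_inv k n' (\<sigma> \<circ> \<theta>) P' (s0 \<circ> t)"
  using assms unfolding sec_inv_def step_ok_def by auto

lemma ins_step:
  assumes "length P0 = n" "i \<le> n"
  shows "step_ok n (Suc n) (insert_at i e) P0 (take i P0 @ [Some e] @ drop i P0) (remove_at i)"
  unfolding step_ok_def
proof (intro conjI allI impI)
  fix x :: "bool list" assume "length x = Suc n"
  then show "insert_at i e (proj P0 (remove_at i x)) = proj (take i P0 @ [Some e] @ drop i P0) x"
    using assms by (intro nth_equalityI) (auto simp: insert_at_nth remove_at_nth nth_append min_def)
next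
  fix w assume "inS P0 w" then show "inS (take i P0 @ [Some e] @ drop i P0) (insert_at i e w)"
    using assms unfolding inS_def by (auto simp: insert_at_nth nth_append min_def)
qed (use assms remove_at_edge in auto)

lemma rem_step:
  assumes "length P0 = Suc n" "i \<le> n"
  shows "step_ok (Suc n) n (remove_at i) P0 (take i P0 @ drop (Suc i) P0) (insert_at i (the_or (P0!i) False))"
  unfolding step_ok_def
proof (intro conjI allI impI)
  fix x :: "bool list" assume "length x = n"
  then show "remove_at i (proj P0 (insert_at i (the_or (P0!i) False) x)) = proj (take i P0 @ drop (Suc i) P0) x"
    using assms by (intro nth_equalityI) (auto simp: insert_at_nth remove_at_nth nth_append min_def)
next
  fix w assume "inS P0 w" then show "inS (take i P0 @ drop (Suc i) P0) (remove_at i w)"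
    using assms unfolding inS_def by (auto simp: remove_at_nth nth_append min_def)
next
  fix x y assume "edge (cube_graph n) x y"
  then show "edge (cube_graph (Suc n)) (insert_at i (the_or (P0!i) False) x) (insert_at i (the_or (P0!i) False) y)"
    using assms insert_at_edge by auto
qed (use assms in auto)


lemma op_dich:
  assumes "op = (\<or>) \<or> op = (\<and>)"
  shows "(\<forall>z. op (the_or a z) (case b of Some c \<Rightarrow> c | None \<Rightarrow> if a = None then \<not> op True False else z)
            = op (the_or a False) (case b of Some c \<Rightarrow> c | None \<Rightarrow> if a = None then \<not> op True False else False))
       \<or> (\<forall>z. op (the_or a z) (case b of Some c \<Rightarrow> c | None \<Rightarrow> if a = None then \<not> op True False else z) = z)"
  using assms by (cases a; cases b) (auto simp: the_or_def)

lemma op_const: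
  assumes "op = (\<or>) \<or> op = (\<and>)"
    and "\<forall>z. op (the_or a z) (case b of Some c \<Rightarrow> c | None \<Rightarrow> if a = None then \<not> op True False else z)
            = op (the_or a False) (case b of Some c \<Rightarrow> c | None \<Rightarrow> if a = None then \<not> op True False else False)"
    and "the_or a z1 = z1" "the_or b z2 = z2"
  shows "op z1 z2 = op (the_or a False) (case b of Some c \<Rightarrow> c | None \<Rightarrow> if a = None then \<not> op True False else False)"
  using assms by (cases a; cases b) (auto simp: the_or_def)

lemma t_edge:
  fixes ta tb :: "bool \<Rightarrow> bool"
  assumes e: "edge (cube_graph (Suc n)) x y" and i: "i \<le> n"
    and cst: "(\<forall>z z'. ta z = ta z') \<or> (\<forall>z z'. tb z = tb z')"
  shows "edge (cube_graph (Suc (Suc n))) (take i x @ [ta (x!i), tb (x!i)] @ drop (Suc i) x)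
           (take i y @ [ta (y!i), tb (y!i)] @ drop (Suc i) y)"
proof -
  define C where "C = (\<forall>z z'. ta z = ta z')"
  have l: "length x = Suc n" "length y = Suc n" using e by (auto simp: cedge_iff)
  have tnth: "length u = Suc n \<Longrightarrow> j < Suc (Suc n) \<Longrightarrow> (take i u @ [ta (u!i), tb (u!i)] @ drop (Suc i) u) ! j =
     (if j < i then u!j else if j = i then ta (u!i) else if j = Suc i then tb (u!i) else u!(j - 1))" for u j
    using i by (auto simp: nth_append min_def numeral_2_eq_2 Suc_diff_Suc)
  show ?thesis
  proof (rule edge_transfer[OF e, where S="\<lambda>j. if j < i then {j} else if j = i then (if C then {} else {i})
          else if j = Suc i then (if C then {i} else {}) else {j - 1}"])
    fix j assume j: "j < Suc (Suc n)"
      "(take i x @ [ta (x!i), tb (x!i)] @ drop (Suc i) x) ! j \<noteq> (take i y @ [ta (y!i), tb (y!i)] @ drop (Suc i) y) ! j"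
    note jx = tnth[OF l(1) j(1)] and jy = tnth[OF l(2) j(1)]
    show "\<exists>aa<Suc n. aa \<in> (if j < i then {j} else if j = i then (if C then {} else {i})
          else if j = Suc i then (if C then {i} else {}) else {j - 1}) \<and> x ! aa \<noteq> y ! aa"
    proof (cases "j = i \<or> j = Suc i")
      case True
      have "x!i \<noteq> y!i"
      proof
        assume "x!i = y!i" then show False using j(2) jx jy True by auto
      qed
      moreover have "j = i \<longrightarrow> \<not> C"
      proof
        assume ji: "j = i" show "\<not> C"
        proof
          assume C then have "ta (x!i) = ta (y!i)" unfolding C_def by blast
          then show False using j(2) jx jy ji by simp
        qed
      qed
      moreover have "j = Suc i \<longrightarrow> C"
      proof
        assume ji: "j = Suc i" show "C"
        proof (rule ccontr)
          assume "\<not> C" then have "tb (x!i) = tb (y!i)" using cst unfolding C_def by blast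
          then show False using j(2) jx jy ji by simp
        qed
      qed
      ultimately show ?thesis using True i by (intro exI[of _ i]) auto
    next
      case False
      then show ?thesis using j jx jy i by (auto split: if_splits)
    qed
  next
    show "length (take i x @ [ta (x!i), tb (x!i)] @ drop (Suc i) x) = Suc (Suc n)" using l i by simp
  next
    show "length (take i y @ [ta (y!i), tb (y!i)] @ drop (Suc i) y) = Suc (Suc n)" using l i by simp
  next
    fix j j' aa assume "j \<noteq> j'" "aa \<in> (if j < i then {j} else if j = i then (if C then {} else {i})
          else if j = Suc i then (if C then {i} else {}) else {j - 1})"
      "aa \<in> (if j' < i then {j'} else if j' = i then (if C then {} else {i})
          else if j' = Suc i then (if C then {i} else {}) else {j' - 1})"
    then show False by (auto split: if_splits)
  qed
qed

lemma conn_step: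
  assumes op: "op = (\<or>) \<or> op = (\<and>)" and len: "length P0 = Suc (Suc n)" and i: "i \<le> n"
  shows "\<exists>P' t. step_ok (Suc (Suc n)) (Suc n) (connect_at i op) P0 P' t"
proof -
  define a where "a = P0 ! i"
  define b where "b = P0 ! Suc i"
  define ta where "ta z = the_or a z" for z
  define tb where "tb z = (case b of Some c \<Rightarrow> c | None \<Rightarrow> if a = None then \<not> op True False else z)" for z
  define h where "h z = op (ta z) (tb z)" for z
  define c where "c = (if \<forall>z. h z = h False then Some (h False) else None)"
  define P' where "P' = take i P0 @ [c] @ drop (Suc (Suc i)) P0"
  define t where "t x = take i x @ [ta (x!i), tb (x!i)] @ drop (Suc i) x" for x :: "bool list"
  have lenP': "length P' = Suc n" using len i by (simp add: P'_def)
  have P'nth: "j < Suc n \<Longrightarrow> P' ! j = (if j < i then P0!j else if j = i then c else P0 ! Suc j)" for j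
    using len i by (auto simp: P'_def nth_append min_def)
  have tlen: "length x = Suc n \<Longrightarrow> length (t x) = Suc (Suc n)" for x using i by (simp add: t_def)
  have tnth: "length x = Suc n \<Longrightarrow> j < Suc (Suc n) \<Longrightarrow> t x ! j =
     (if j < i then x!j else if j = i then ta (x!i) else if j = Suc i then tb (x!i) else x!(j - 1))" for x j
    using i by (auto simp: t_def nth_append min_def numeral_2_eq_2 Suc_diff_Suc)
  have dich: "(\<forall>z. h z = h False) \<or> (\<forall>z. h z = z)"
    using op_dich[OF op, of a b] unfolding h_def ta_def tb_def by simp
  have hc: "the_or c z = h z" for z using dich by (auto simp: c_def)
  have tac: "a \<noteq> None \<Longrightarrow> ta z = ta z'" for z z' by (auto simp: ta_def the_or_def)
  have tbc: "a = None \<Longrightarrow> tb z = tb z'" for z z' by (auto simp: tb_def split: option.splits)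
  have "step_ok (Suc (Suc n)) (Suc n) (connect_at i op) P0 P' t"
    unfolding step_ok_def
  proof (intro conjI allI impI)
    show "length P' = Suc n" by (rule lenP')
  next
    fix x :: "bool list" assume "length x = Suc n" then show "length (t x) = Suc (Suc n)" by (rule tlen)
  next
    fix x y assume e: "edge (cube_graph (Suc n)) x y"
    have l: "length x = Suc n" "length y = Suc n" using e by (auto simp: cedge_iff)
    show "edge (cube_graph (Suc (Suc n))) (t x) (t y)"
      unfolding t_def
    proof (rule t_edge[OF e i])
      show "(\<forall>z z'. ta z = ta z') \<or> (\<forall>z z'. tb z = tb z')"
        using tac tbc by blast
    qed
  next
    fix x :: "bool list" assume l: "length x = Suc n"
    show "connect_at i op (proj P0 (t x)) = proj P' x"
    proof (rule nth_equalityI)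
      show "length (connect_at i op (proj P0 (t x))) = length (proj P' x)"
        using len lenP' i by simp
    next
      fix j assume "j < length (connect_at i op (proj P0 (t x)))"
      then have j: "j < Suc n" using len i by simp
      have tbb: "the_or b (tb z) = tb z" for z by (auto simp: tb_def the_or_def split: option.splits)
      have pl: "length (proj P0 (t x)) = Suc (Suc n)" using len by simp
      have cn: "connect_at i op (proj P0 (t x)) ! j = (if j < i then proj P0 (t x) ! j else if j = i then
          op (proj P0 (t x) ! i) (proj P0 (t x) ! Suc i) else proj P0 (t x) ! Suc j)"
        using connect_at_nth[of i "proj P0 (t x)" j op] pl i j by simp
      have rn: "proj P' x ! j = the_or (P'!j) (x!j)" using j lenP' by simp
      show "connect_at i op (proj P0 (t x)) ! j = proj P' x ! j"
      proof (cases "j < i")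
        case True
        then show ?thesis using cn rn P'nth[OF j] tnth[OF l, of j] j len by simp
      next
        case False
        show ?thesis
        proof (cases "j = i")
          case True
          have "proj P0 (t x) ! i = ta (x!i)" using tnth[OF l, of i] i len by (simp add: ta_def a_def)
          moreover have "proj P0 (t x) ! Suc i = tb (x!i)" using tnth[OF l, of "Suc i"] i len tbb by (simp add: b_def)
          ultimately show ?thesis using cn rn P'nth[OF j] True hc by (simp add: h_def)
        next
          case False2: False
          have "proj P0 (t x) ! Suc j = the_or (P0 ! Suc j) (x!j)"
            using tnth[OF l, of "Suc j"] False False2 j len by simp
          then show ?thesis using cn rn P'nth[OF j] False False2 by simp
        qed
      qed
    qed
  next
    fix w assume w: "inS P0 w"
    have wl: "length w = Suc (Suc n)" using w len by (simp add: inS_def)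
    have wn: "\<And>j. j < Suc (Suc n) \<Longrightarrow> the_or (P0!j) (w!j) = w!j" using w len by (simp add: inS_def)
    show "inS P' (connect_at i op w)"
      unfolding inS_def
    proof (intro conjI allI impI)
      show "length (connect_at i op w) = length P'" using wl lenP' i by simp
    next
      fix j assume "j < length P'"
      then have j: "j < Suc n" using lenP' by simp
      show "the_or (P' ! j) (connect_at i op w ! j) = connect_at i op w ! j"
      proof (cases "j = i")
        case True
        have cw: "connect_at i op w ! i = op (w!i) (w!Suc i)" using wl i by (simp add: connect_at_nth)
        show ?thesis
        proof (cases "\<forall>z. h z = h False")
          case True
          then have "op (w!i) (w!Suc i) = h False"
            using op_const[OF op, of a b "w!i" "w!Suc i"] wn[of i] wn[of "Suc i"] i
            unfolding h_def ta_def tb_def a_def b_def by auto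
          then show ?thesis using True \<open>j = i\<close> cw P'nth[OF j] by (simp add: c_def)
        next
          case False
          then have "c = None" unfolding c_def by auto
          then show ?thesis using \<open>j = i\<close> P'nth[OF j] by simp
        qed
      next
        case False
        then show ?thesis using j wl i wn P'nth[OF j] by (auto simp: connect_at_nth)
      qed
    qed
  qed
  then show ?thesis by blast
qed

lemma boxmor_sec: "boxmor k m \<theta> \<Longrightarrow> \<exists>P s. sec_inv k m \<theta> P s"
proof (induction rule: boxmor.induct)
  case (bid k)
  have "sec_inv k k id (replicate k None) id"
    unfolding sec_inv_def inS_def by (auto intro!: nth_equalityI)
  then show ?case by blast
next
  case (bface k n \<theta> i e)
  then obtain P s where ps: "sec_inv k n \<theta> P s" by blast
  then have "length P = n" by (simp add: sec_inv_def)
  then have "step_ok n (Suc n) (insert_at i e) P (take i P @ [Some e] @ drop i P) (remove_at i)"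
    using ins_step bface.hyps by blast
  then show ?case using step_combine[OF ps] by blast
next
  case (bdegen k n \<theta> i)
  then obtain P s where ps: "sec_inv k (Suc n) \<theta> P s" by blast
  then have "length P = Suc n" by (simp add: sec_inv_def)
  then have "step_ok (Suc n) n (remove_at i) P (take i P @ drop (Suc i) P) (insert_at i (the_or (P!i) False))"
    using rem_step bdegen.hyps by blast
  then show ?case using step_combine[OF ps] by blast
next
  case (bconn_max k n \<theta> i)
  then obtain P s where ps: "sec_inv k (Suc (Suc n)) \<theta> P s" by blast
  then obtain P' t where "step_ok (Suc (Suc n)) (Suc n) (connect_at i (\<or>)) P P' t"
    using conn_step[of "(\<or>)" P n i] bconn_max.hyps ps unfolding sec_inv_def by blast
  then show ?case using step_combine ps by blast
next
  case (bconn_min k n \<theta> i)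
  then obtain P s where ps: "sec_inv k (Suc (Suc n)) \<theta> P s" by blast
  then obtain P' t where "step_ok (Suc (Suc n)) (Suc n) (connect_at i (\<and>)) P P' t"
    using conn_step[of "(\<and>)" P n i] bconn_min.hyps ps unfolding sec_inv_def by blast
  then show ?case using step_combine ps by blast
qed


lemma cubesD:
  assumes "c \<in> cubes X k"
  shows "\<And>x. length x = k \<Longrightarrow> c x \<in> verts X"
    and "\<And>x y. edge (cube_graph k) x y \<Longrightarrow> edge X (c x) (c y)"
    and "\<And>x. length x \<noteq> k \<Longrightarrow> c x = undefined"
  using assms by (auto simp: cubes_def graph_map_def)

lemma cubesI:
  assumes "\<And>x. length x = k \<Longrightarrow> c x \<in> verts X"
    and "\<And>x y. edge (cube_graph k) x y \<Longrightarrow> edge X (c x) (c y)"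
    and "\<And>x. length x \<noteq> k \<Longrightarrow> c x = undefined"
  shows "c \<in> cubes X k"
  using assms by (auto simp: cubes_def graph_map_def)

lemma compose_cube:
  assumes "boxmor k m \<theta>" "d \<in> cubes X m"
  shows "(\<lambda>x. if length x = k then d (\<theta> x) else undefined) \<in> cubes X k"
proof (rule cubesI)
  fix x :: "bool list" assume "length x = k" then show "(if length x = k then d (\<theta> x) else undefined) \<in> verts X"
    using assms boxmor_len cubesD(1) by fastforce
next
  fix x y assume e: "edge (cube_graph k) x y"
  then have "length x = k" "length y = k" by (auto simp: cedge_iff)
  then show "edge X (if length x = k then d (\<theta> x) else undefined) (if length y = k then d (\<theta> y) else undefined)"
    using cubesD(2)[OF assms(2) boxmor_edge[OF assms(1) e]] by simp
qed simp

lemma postc_cube: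
  assumes "c \<in> cubes X k" "graph_map X Y \<phi>"
  shows "postc k \<phi> c \<in> cubes Y k"
  using assms unfolding postc_def by (intro cubesI) (auto simp: graph_map_def cubesD cedge_iff)

lemma postc_sk:
  assumes "c \<in> skcubes n X k" "graph_map X Y \<phi>"
  shows "postc k \<phi> c \<in> skcubes n Y k"
proof -
  obtain m \<theta> d where md: "m \<le> n" "boxmor k m \<theta>" "d \<in> cubes X m" "\<forall>x. length x = k \<longrightarrow> c x = d (\<theta> x)"
    and c: "c \<in> cubes X k"
    using assms(1) unfolding skcubes_def by blast
  have "postc m \<phi> d \<in> cubes Y m" using postc_cube md(3) assms(2) by blast
  moreover have "\<forall>x. length x = k \<longrightarrow> postc k \<phi> c x = postc m \<phi> d (\<theta> x)"
    using md boxmor_len by (simp add: postc_def)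
  ultimately show ?thesis using postc_cube[OF c assms(2)] md unfolding skcubes_def by blast
qed

lemma cube_ext:
  assumes "c \<in> cubes X k" "c' \<in> cubes Y k" "\<And>x. length x = k \<Longrightarrow> c x = c' x"
  shows "c = c'"
proof
  fix x show "c x = c' x" using assms cubesD(3)[OF assms(1)] cubesD(3)[OF assms(2)] by (cases "length x = k") auto
qed

lemma pushout_crit:
  assumes am: "graph_map A B a" and bm: "graph_map A C b" and cm: "graph_map B D c" and dm: "graph_map C D d"
    and comm: "\<And>x. x \<in> verts A \<Longrightarrow> c (a x) = d (b x)"
    and injc: "inj_on c (verts B)" and injd: "inj_on d (verts C)"
    and lift: "\<And>m e. m \<le> n \<Longrightarrow> e \<in> cubes D m \<Longrightarrow>
        (\<exists>e'\<in>cubes B m. \<forall>x. length x = m \<longrightarrow> c (e' x) = e x) \<or> (\<exists>e'\<in>cubes C m. \<forall>x. length x = m \<longrightarrow> d (e' x) = e x)"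
    and pbv: "\<And>z w. z \<in> verts B \<Longrightarrow> w \<in> verts C \<Longrightarrow> c z = d w \<Longrightarrow> \<exists>x\<in>verts A. a x = z \<and> b x = w"
    and pbe: "\<And>x1 x2. x1 \<in> verts A \<Longrightarrow> x2 \<in> verts A \<Longrightarrow> edge B (a x1) (a x2) \<Longrightarrow> edge C (b x1) (b x2) \<Longrightarrow> edge A x1 x2"
  shows "skel_pushout n A B C D a b c d"
  unfolding skel_pushout_def
proof
  fix k
  let ?A = "skcubes n A k" and ?B = "skcubes n B k" and ?C = "skcubes n C k" and ?D = "skcubes n D k"
  let ?R = "{(Inl (postc k a x), Inr (postc k b x)) | x. x \<in> ?A}"
  have skc: "u \<in> skcubes n X k \<Longrightarrow> u \<in> cubes X k" for u and X :: "'z graph" by (simp add: skcubes_def)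
  have postc_eq: "postc k \<phi> u = postc k \<psi> v" if "u \<in> cubes X k" "v \<in> cubes Y k" "\<And>x. length x = k \<Longrightarrow> \<phi> (u x) = \<psi> (v x)"
    for \<phi> \<psi> u v and X :: "'z graph" and Y :: "'w graph"
    using that by (auto simp: postc_def)
  have mixed: "\<exists>u0\<in>?A. postc k a u0 = u1 \<and> postc k b u0 = v1"
    if u1: "u1 \<in> ?B" and v1: "v1 \<in> ?C" and eq: "postc k c u1 = postc k d v1" for u1 v1
  proof -
    obtain m \<theta> e where me: "m \<le> n" "boxmor k m \<theta>" "e \<in> cubes B m" "\<forall>x. length x = k \<longrightarrow> u1 x = e (\<theta> x)"
      using u1 unfolding skcubes_def by blast
    obtain P s where ps: "sec_inv k m \<theta> P s" using boxmor_sec[OF me(2)] by blast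
    have lP: "length P = m" and inSP: "\<And>y. length y = k \<Longrightarrow> inS P (\<theta> y)"
      and sl: "\<And>x. length x = m \<Longrightarrow> length (s x) = k"
      and se: "\<And>x y. edge (cube_graph m) x y \<Longrightarrow> edge (cube_graph k) (s x) (s y)"
      and ts: "\<And>x. length x = m \<Longrightarrow> \<theta> (s x) = proj P x"
      using ps unfolding sec_inv_def by auto
    have u1c: "u1 \<in> cubes B k" and v1c: "v1 \<in> cubes C k" using u1 v1 by (auto simp: skcubes_def)
    define e' where "e' x = (if length x = m then e (proj P x) else undefined)" for x :: "bool list"
    define e2 where "e2 x = (if length x = m then v1 (s x) else undefined)" for x :: "bool list"
    have e'c: "e' \<in> cubes B m"
    proof (rule cubesI)
      fix x y assume xy: "edge (cube_graph m) x y"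
      then have "length x = m" "length y = m" by (auto simp: cedge_iff)
      moreover have "edge (cube_graph m) (proj P x) (proj P y)" using proj_edge[of P x y] xy lP by simp
      ultimately show "edge B (e' x) (e' y)" using cubesD(2)[OF me(3)]
        by (simp add: e'_def)
    next
      fix x :: "bool list" assume "length x = m"
      then show "e' x \<in> verts B" using cubesD(1)[OF me(3), of "proj P x"] lP by (simp add: e'_def)
    qed (simp add: e'_def)
    have e2c: "e2 \<in> cubes C m"
    proof (rule cubesI)
      fix x y assume xy: "edge (cube_graph m) x y"
      then have "length x = m" "length y = m" by (auto simp: cedge_iff)
      then show "edge C (e2 x) (e2 y)" using cubesD(2)[OF v1c se[OF xy]] by (simp add: e2_def)
    next
      fix x :: "bool list" assume "length x = m"
      then show "e2 x \<in> verts C" using cubesD(1)[OF v1c, of "s x"] sl by (simp add: e2_def)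
    qed (simp add: e2_def)
    have ce: "c (e' x) = d (e2 x)" if "length x = m" for x
    proof -
      have "e' x = u1 (s x)" using that me(4) sl ts by (simp add: e'_def)
      moreover have "postc k c u1 (s x) = postc k d v1 (s x)" using eq by simp
      ultimately show ?thesis using that sl by (simp add: postc_def e2_def)
    qed
    have ex0: "\<exists>x0\<in>verts A. a x0 = e' x \<and> b x0 = e2 x" if "length x = m" for x
      using pbv[OF cubesD(1)[OF e'c that] cubesD(1)[OF e2c that] ce[OF that]] .
    define e0 where "e0 x = (if length x = m then (SOME x0. x0 \<in> verts A \<and> a x0 = e' x \<and> b x0 = e2 x) else undefined)" for x :: "bool list"
    have e0p: "e0 x \<in> verts A \<and> a (e0 x) = e' x \<and> b (e0 x) = e2 x" if "length x = m" for x
    proof -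
      have "\<exists>x0. x0 \<in> verts A \<and> a x0 = e' x \<and> b x0 = e2 x" using ex0[OF that] by blast
      from someI_ex[OF this] show ?thesis using that by (simp add: e0_def)
    qed
    have e0c: "e0 \<in> cubes A m"
    proof (rule cubesI)
      fix x y assume xy: "edge (cube_graph m) x y"
      then have "length x = m" "length y = m" by (auto simp: cedge_iff)
      then show "edge A (e0 x) (e0 y)"
        using pbe e0p cubesD(2)[OF e'c xy] cubesD(2)[OF e2c xy] by metis
    qed (use e0p in \<open>auto simp: e0_def\<close>)
    define u0 where "u0 x = (if length x = k then e0 (\<theta> x) else undefined)" for x :: "bool list"
    have u0c: "u0 \<in> cubes A k" unfolding u0_def by (rule compose_cube[OF me(2) e0c])
    have u0s: "u0 \<in> ?A" unfolding skcubes_def using u0c me e0c by (auto simp: u0_def)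
    have "postc k a u0 = u1"
    proof (rule cube_ext[OF postc_cube[OF u0c am] u1c])
      fix x :: "bool list" assume x: "length x = k"
      then have lt: "length (\<theta> x) = m" using boxmor_len me(2) by blast
      have "proj P (\<theta> x) = \<theta> x" using inS_proj inSP x by blast
      then show "postc k a u0 x = u1 x" using x lt e0p[OF lt] me(4) by (simp add: postc_def u0_def e'_def)
    qed
    moreover have "postc k b u0 = v1"
    proof (rule cube_ext[OF postc_cube[OF u0c bm] v1c])
      fix x :: "bool list" assume x: "length x = k"
      then have lt: "length (\<theta> x) = m" using boxmor_len me(2) by blast
      have 1: "postc k b u0 x = v1 (s (\<theta> x))" using x lt e0p[OF lt] by (simp add: postc_def u0_def e2_def)
      have "d (v1 (s (\<theta> x))) = c (e' (\<theta> x))" using ce[OF lt] lt by (simp add: e2_def)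
      also have "\<dots> = c (u1 x)"
        using inS_proj inSP x lt me(4) by (simp add: e'_def)
      also have "\<dots> = d (v1 x)" using fun_cong[OF eq, of x] x by (simp add: postc_def)
      finally have deq: "d (v1 (s (\<theta> x))) = d (v1 x)" .
      moreover have "v1 (s (\<theta> x)) \<in> verts C" using cubesD(1)[OF v1c] sl[OF lt] by simp
      moreover have "v1 x \<in> verts C" using cubesD(1)[OF v1c] x by simp
      ultimately have "v1 (s (\<theta> x)) = v1 x"
        using injd by (meson inj_onD)
      then show "postc k b u0 x = v1 x" using 1 by simp
    qed
    ultimately show ?thesis using u0s by blast
  qed
  show "pushout_set ?A ?B ?C ?D (postc k a) (postc k b) (postc k c) (postc k d)"
    unfolding pushout_set_def
  proof (intro conjI ballI impI)
    fix x assume x: "x \<in> ?A"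
    show "postc k a x \<in> ?B" using postc_sk[OF x am] .
    show "postc k b x \<in> ?C" using postc_sk[OF x bm] .
    show "postc k c (postc k a x) = postc k d (postc k b x)"
      using comm cubesD(1)[OF skc[OF x]] by (auto simp: postc_def)
  next
    fix y assume "y \<in> ?B" then show "postc k c y \<in> ?D" using postc_sk cm by blast
  next
    fix z assume "z \<in> ?C" then show "postc k d z \<in> ?D" using postc_sk dm by blast
  next
    fix w assume w: "w \<in> ?D"
    obtain m \<theta> e where me: "m \<le> n" "boxmor k m \<theta>" "e \<in> cubes D m" "\<forall>x. length x = k \<longrightarrow> w x = e (\<theta> x)"
      using w unfolding skcubes_def by blast
    have wc: "w \<in> cubes D k" using w by (simp add: skcubes_def)
    from lift[OF me(1) me(3)] show "\<exists>u\<in>?B <+> ?C. case_sum (postc k c) (postc k d) u = w"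
    proof
      assume "\<exists>e'\<in>cubes B m. \<forall>x. length x = m \<longrightarrow> c (e' x) = e x"
      then obtain e' where e': "e' \<in> cubes B m" "\<forall>x. length x = m \<longrightarrow> c (e' x) = e x" by blast
      define u where "u x = (if length x = k then e' (\<theta> x) else undefined)" for x :: "bool list"
      have uc: "u \<in> cubes B k" unfolding u_def by (rule compose_cube[OF me(2) e'(1)])
      have us: "u \<in> ?B" unfolding skcubes_def using uc me e' by (auto simp: u_def)
      have "postc k c u = w"
        by (rule cube_ext[OF postc_cube[OF uc cm] wc]) (use me e' boxmor_len in \<open>auto simp: postc_def u_def\<close>)
      then show ?thesis using us by force
    next
      assume "\<exists>e'\<in>cubes C m. \<forall>x. length x = m \<longrightarrow> d (e' x) = e x"
      then obtain e' where e': "e' \<in> cubes C m" "\<forall>x. length x = m \<longrightarrow> d (e' x) = e x" by blast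
      define u where "u x = (if length x = k then e' (\<theta> x) else undefined)" for x :: "bool list"
      have uc: "u \<in> cubes C k" unfolding u_def by (rule compose_cube[OF me(2) e'(1)])
      have us: "u \<in> ?C" unfolding skcubes_def using uc me e' by (auto simp: u_def)
      have "postc k d u = w"
        by (rule cube_ext[OF postc_cube[OF uc dm] wc]) (use me e' boxmor_len in \<open>auto simp: postc_def u_def\<close>)
      then show ?thesis using us by force
    qed
  next
    fix u v assume u: "u \<in> ?B <+> ?C" and v: "v \<in> ?B <+> ?C"
      and eq: "case_sum (postc k c) (postc k d) u = case_sum (postc k c) (postc k d) v"
    show "(u, v) \<in> (?R \<union> ?R\<inverse>)\<^sup>*"
    proof (cases u)
      case (Inl u1)
      then have u1: "u1 \<in> ?B" using u by auto
      show ?thesis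
      proof (cases v)
        case (Inl v1)
        then have v1: "v1 \<in> ?B" using v by auto
        have "u1 = v1"
        proof (rule cube_ext[OF skc[OF u1] skc[OF v1]])
          fix x :: "bool list" assume "length x = k"
          then show "u1 x = v1 x" using fun_cong[OF eq, of x] \<open>u = Inl u1\<close> Inl injc
            cubesD(1)[OF skc[OF u1]] cubesD(1)[OF skc[OF v1]] by (auto simp: postc_def inj_on_def)
        qed
        then show ?thesis using Inl \<open>u = Inl u1\<close> by simp
      next
        case (Inr v1)
        then have v1: "v1 \<in> ?C" using v by auto
        obtain u0 where "u0 \<in> ?A" "postc k a u0 = u1" "postc k b u0 = v1"
          using mixed[OF u1 v1] eq Inr \<open>u = Inl u1\<close> by auto
        then have "(u, v) \<in> ?R" using Inr \<open>u = Inl u1\<close> by blast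
        then show ?thesis by blast
      qed
    next
      case (Inr u1)
      then have u1: "u1 \<in> ?C" using u by auto
      show ?thesis
      proof (cases v)
        case (Inr v1)
        then have v1: "v1 \<in> ?C" using v by auto
        have "u1 = v1"
        proof (rule cube_ext[OF skc[OF u1] skc[OF v1]])
          fix x :: "bool list" assume "length x = k"
          then show "u1 x = v1 x" using fun_cong[OF eq, of x] \<open>u = Inr u1\<close> Inr injd
            cubesD(1)[OF skc[OF u1]] cubesD(1)[OF skc[OF v1]] by (auto simp: postc_def inj_on_def)
        qed
        then show ?thesis using Inr \<open>u = Inr u1\<close> by simp
      next
        case (Inl v1)
        then have v1: "v1 \<in> ?B" using v by auto
        obtain u0 where "u0 \<in> ?A" "postc k a u0 = v1" "postc k b u0 = u1"
          using mixed[OF v1 u1] eq Inl \<open>u = Inr u1\<close> by auto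
        then have "(v, u) \<in> ?R" using Inl \<open>u = Inr u1\<close> by blast
        then show ?thesis by blast
      qed
    qed
  qed
qed


lemma gen_eqv_sub: "gen_eqv V R \<subseteq> V \<times> V" by (auto simp: gen_eqv_def)

lemma key_resp:
  assumes "\<And>x y. (x, y) \<in> R \<Longrightarrow> \<kappa> x = \<kappa> y" "(x, y) \<in> (R \<union> R\<inverse>)\<^sup>*"
  shows "\<kappa> x = \<kappa> y"
  using assms(2) by (induction rule: rtrancl_induct) (auto dest: assms(1))

lemma gen_eqv_key:
  assumes Rk: "\<And>x y. (x, y) \<in> R \<Longrightarrow> \<kappa> x = \<kappa> y"
    and Rc: "\<And>x. x \<in> V \<Longrightarrow> (x, \<kappa> x) \<in> (R \<union> R\<inverse>)\<^sup>*"
    and xy: "x \<in> V" "y \<in> V"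
  shows "(x, y) \<in> gen_eqv V R \<longleftrightarrow> \<kappa> x = \<kappa> y"
proof
  assume "(x, y) \<in> gen_eqv V R"
  then show "\<kappa> x = \<kappa> y" using key_resp[OF Rk] by (auto simp: gen_eqv_def)
next
  assume eq: "\<kappa> x = \<kappa> y"
  have "(y, \<kappa> y) \<in> (R \<union> R\<inverse>)\<^sup>*" using Rc xy by blast
  then have "(\<kappa> y, y) \<in> ((R \<union> R\<inverse>)\<inverse>)\<^sup>*" by (simp add: rtrancl_converse)
  moreover have "(R \<union> R\<inverse>)\<inverse> = R \<union> R\<inverse>" by auto
  ultimately have "(\<kappa> y, y) \<in> (R \<union> R\<inverse>)\<^sup>*" by simp
  then have "(x, y) \<in> (R \<union> R\<inverse>)\<^sup>*" using Rc[OF xy(1)] eq by (metis rtrancl_trans)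
  then show "(x, y) \<in> gen_eqv V R" using xy by (simp add: gen_eqv_def)
qed

definition kcls :: "'a set \<Rightarrow> ('a \<Rightarrow> 'b) \<Rightarrow> 'a \<Rightarrow> 'a set" where
  "kcls V \<kappa> x = {y \<in> V. \<kappa> y = \<kappa> x}"

definition kernel :: "'a set \<Rightarrow> ('a \<times> 'a) set \<Rightarrow> ('a \<Rightarrow> 'b) \<Rightarrow> bool" where
  "kernel V R \<kappa> \<longleftrightarrow> (\<forall>x\<in>V. \<forall>y\<in>V. (x, y) \<in> gen_eqv V R \<longleftrightarrow> \<kappa> x = \<kappa> y)"

lemma kernelI:
  assumes "\<And>x y. (x, y) \<in> R \<Longrightarrow> \<kappa> x = \<kappa> y" "\<And>x. x \<in> V \<Longrightarrow> (x, \<kappa> x) \<in> (R \<union> R\<inverse>)\<^sup>*"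
  shows "kernel V R \<kappa>"
  using gen_eqv_key[OF assms] unfolding kernel_def by blast

lemma kernel_cls: "kernel V R \<kappa> \<Longrightarrow> x \<in> V \<Longrightarrow> gen_eqv V R `` {x} = kcls V \<kappa> x"
  unfolding kernel_def kcls_def using gen_eqv_sub[of V R] by auto

lemma kernel_quot: "kernel V R \<kappa> \<Longrightarrow> V // gen_eqv V R = kcls V \<kappa> ` V"
  unfolding quotient_def using kernel_cls by fastforce

lemma kcls_eq: "x \<in> V \<Longrightarrow> y \<in> V \<Longrightarrow> kcls V \<kappa> x = kcls V \<kappa> y \<longleftrightarrow> \<kappa> x = \<kappa> y"
proof
  assume "x \<in> V" "kcls V \<kappa> x = kcls V \<kappa> y"
  moreover have "x \<in> kcls V \<kappa> x" using \<open>x \<in> V\<close> by (simp add: kcls_def)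
  ultimately have "x \<in> kcls V \<kappa> y" by simp
  then show "\<kappa> x = \<kappa> y" by (simp add: kcls_def)
qed (simp add: kcls_def)

lemma kcls_mem: "y \<in> kcls V \<kappa> x \<longleftrightarrow> y \<in> V \<and> \<kappa> y = \<kappa> x"
  by (simp add: kcls_def)

lemma kcls_some: "x \<in> V \<Longrightarrow> (SOME y. y \<in> kcls V \<kappa> x) \<in> V \<and> \<kappa> (SOME y. y \<in> kcls V \<kappa> x) = \<kappa> x"
  using someI[of "\<lambda>y. y \<in> kcls V \<kappa> x" x] by (simp add: kcls_def)

lemma quot_verts: "kernel (verts U) R \<kappa> \<Longrightarrow> verts (quot_graph U R) = kcls (verts U) \<kappa> ` verts U"
  by (simp add: quot_graph_def kernel_quot)

lemma quot_edge: "kernel (verts U) R \<kappa> \<Longrightarrow> edge (quot_graph U R) X Y \<longleftrightarrow>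
    X \<in> kcls (verts U) \<kappa> ` verts U \<and> Y \<in> kcls (verts U) \<kappa> ` verts U \<and> (\<exists>x\<in>X. \<exists>y\<in>Y. edge U x y)"
  by (simp add: quot_graph_def kernel_quot)

lemma cyl_pre_verts:
  "x \<in> verts (cyl_pre G H K m) \<longleftrightarrow> (case x of Inl h \<Rightarrow> h \<in> verts H
       | Inr (Inl (v, t)) \<Rightarrow> v \<in> verts G \<and> t \<le> m | Inr (Inr k) \<Rightarrow> k \<in> verts K)"
  by (auto simp: cyl_pre_def box_def interval_def split: sum.splits)

lemma cyl_pre_edge:
  "edge (cyl_pre G H K m) x y \<longleftrightarrow> (case (x, y) of
      (Inl a, Inl b) \<Rightarrow> edge H a b
    | (Inr (Inl (v, t)), Inr (Inl (v', t'))) \<Rightarrow>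
        (v = v' \<and> v \<in> verts G \<and> t \<le> m \<and> t' \<le> m \<and> (t = t' \<or> t = Suc t' \<or> t' = Suc t))
      \<or> (edge G v v' \<and> t = t' \<and> t \<le> m)
    | (Inr (Inr a), Inr (Inr b)) \<Rightarrow> edge K a b
    | _ \<Rightarrow> False)"
  by (auto simp: cyl_pre_def box_def interval_def split: sum.splits prod.splits)

definition keyD :: "nat \<Rightarrow> ('g \<Rightarrow> 'h) \<Rightarrow> ('g \<Rightarrow> 'k) \<Rightarrow> 'h + ('g \<times> nat) + 'k \<Rightarrow> 'h + ('g \<times> nat) + 'k" where
  "keyD M f g x = (case x of Inl h \<Rightarrow> Inl h
     | Inr (Inl (v, t)) \<Rightarrow> if t = 0 then Inl (f v) else if t = M then Inr (Inr (g v)) else Inr (Inl (v, t))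
     | Inr (Inr k) \<Rightarrow> Inr (Inr k))"

definition keyB :: "nat \<Rightarrow> ('g \<Rightarrow> 'h) \<Rightarrow> 'h + ('g \<times> nat) + 'g \<Rightarrow> 'h + ('g \<times> nat) + 'g" where
  "keyB m f x = (case x of Inl h \<Rightarrow> Inl h
     | Inr (Inl (v, t)) \<Rightarrow> if t = 0 then Inl (f v) else if t = m then Inr (Inr v) else Inr (Inl (v, t))
     | Inr (Inr v) \<Rightarrow> if m = 0 then Inl (f v) else Inr (Inr v))"

definition keyC :: "nat \<Rightarrow> ('g \<Rightarrow> 'k) \<Rightarrow> 'g + ('g \<times> nat) + 'k \<Rightarrow> 'g + ('g \<times> nat) + 'k" where
  "keyC m g x = (case x of Inl v \<Rightarrow> if m = 0 then Inr (Inr (g v)) else Inl v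
     | Inr (Inl (v, t)) \<Rightarrow> if t = m then Inr (Inr (g v)) else if t = 0 then Inl v else Inr (Inl (v, t))
     | Inr (Inr k) \<Rightarrow> Inr (Inr k))"

definition posM :: "nat \<Rightarrow> 'g + ('g \<times> nat) + 'g \<Rightarrow> 'g \<times> nat" where
  "posM p x = (case x of Inl v \<Rightarrow> (v, 0) | Inr (Inl vt) \<Rightarrow> vt | Inr (Inr v) \<Rightarrow> (v, p))"

lemma cyl_rel_iff: "(x, y) \<in> cyl_rel G f g m \<longleftrightarrow> (\<exists>v\<in>verts G. (x = Inr (Inl (v, 0)) \<and> y = Inl (f v)) \<or> (x = Inr (Inl (v, m)) \<and> y = Inr (Inr (g v))))"
  by (auto simp: cyl_rel_def)

lemma kernelD:
  assumes "1 \<le> M"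
  shows "kernel (verts (cyl_pre G H K M)) (cyl_rel G f g M) (keyD M f g)"
proof (rule kernelI)
  fix x y assume "(x, y) \<in> cyl_rel G f g M" then show "keyD M f g x = keyD M f g y"
    using assms by (auto simp: cyl_rel_iff keyD_def)
next
  fix x assume x: "x \<in> verts (cyl_pre G H K M)"
  show "(x, keyD M f g x) \<in> (cyl_rel G f g M \<union> (cyl_rel G f g M)\<inverse>)\<^sup>*"
  proof (cases x)
    case (Inl h) then show ?thesis by (simp add: keyD_def)
  next
    case (Inr r)
    show ?thesis
    proof (cases r)
      case (Inl vt)
      obtain v t where vt: "vt = (v, t)" by fastforce
      have v: "v \<in> verts G" using x Inr Inl vt by (simp add: cyl_pre_verts)
      show ?thesis
      proof (cases "t = 0")
        case True
        then have "(x, keyD M f g x) \<in> cyl_rel G f g M" using Inr Inl vt v by (auto simp: cyl_rel_iff keyD_def)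
        then show ?thesis by blast
      next
        case False
        show ?thesis
        proof (cases "t = M")
          case True
          then have "(x, keyD M f g x) \<in> cyl_rel G f g M" using Inr Inl vt v False by (auto simp: cyl_rel_iff keyD_def)
          then show ?thesis by blast
        qed (use Inr Inl vt False in \<open>simp add: keyD_def\<close>)
      qed
    next
      case (Inr k) then show ?thesis using \<open>x = Inr r\<close> by (simp add: keyD_def)
    qed
  qed
qed

lemma kernelB:
  shows "kernel (verts (cyl_pre G H G m)) (cyl_rel G f id m) (keyB m f)"
proof (rule kernelI)
  fix x y assume "(x, y) \<in> cyl_rel G f id m" then show "keyB m f x = keyB m f y"
    by (auto simp: cyl_rel_iff keyB_def)
next
  fix x assume x: "x \<in> verts (cyl_pre G H G m)"
  let ?R = "cyl_rel G f id m"
  show "(x, keyB m f x) \<in> (?R \<union> ?R\<inverse>)\<^sup>*"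
  proof (cases x)
    case (Inl h) then show ?thesis by (simp add: keyB_def)
  next
    case (Inr r)
    show ?thesis
    proof (cases r)
      case (Inl vt)
      obtain v t where vt: "vt = (v, t)" by fastforce
      have v: "v \<in> verts G" using x Inr Inl vt by (simp add: cyl_pre_verts)
      show ?thesis
      proof (cases "t = 0")
        case True
        then have "(x, keyB m f x) \<in> ?R" using Inr Inl vt v by (auto simp: cyl_rel_iff keyB_def)
        then show ?thesis by blast
      next
        case False
        show ?thesis
        proof (cases "t = m")
          case True
          then have "(x, keyB m f x) \<in> ?R" using Inr Inl vt v False by (auto simp: cyl_rel_iff keyB_def)
          then show ?thesis by blast
        qed (use Inr Inl vt False in \<open>simp add: keyB_def\<close>)
      qed
    next
      case (Inr v)
      have v: "v \<in> verts G" using x Inr \<open>x = Inr r\<close> by (simp add: cyl_pre_verts)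
      show ?thesis
      proof (cases "m = 0")
        case True
        have "(Inr (Inl (v, 0)), x) \<in> ?R" using v True Inr \<open>x = Inr r\<close> by (auto simp: cyl_rel_iff)
        moreover have "(Inr (Inl (v, 0)), keyB m f x) \<in> ?R" using v True Inr \<open>x = Inr r\<close>
          by (auto simp: cyl_rel_iff keyB_def)
        ultimately have "(x, Inr (Inl (v, 0))) \<in> ?R \<union> ?R\<inverse>" "(Inr (Inl (v, 0)), keyB m f x) \<in> ?R \<union> ?R\<inverse>" by auto
        then show ?thesis by (meson r_into_rtrancl rtrancl_trans)
      qed (use Inr \<open>x = Inr r\<close> in \<open>simp add: keyB_def\<close>)
    qed
  qed
qed

lemma kernelC:
  shows "kernel (verts (cyl_pre G G K m)) (cyl_rel G id g m) (keyC m g)"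
proof (rule kernelI)
  fix x y assume "(x, y) \<in> cyl_rel G id g m" then show "keyC m g x = keyC m g y"
    by (auto simp: cyl_rel_iff keyC_def)
next
  fix x assume x: "x \<in> verts (cyl_pre G G K m)"
  let ?R = "cyl_rel G id g m"
  show "(x, keyC m g x) \<in> (?R \<union> ?R\<inverse>)\<^sup>*"
  proof (cases x)
    case (Inl v)
    have v: "v \<in> verts G" using x Inl by (simp add: cyl_pre_verts)
    show ?thesis
    proof (cases "m = 0")
      case True
      have "(Inr (Inl (v, 0)), x) \<in> ?R" using v True Inl by (auto simp: cyl_rel_iff)
      moreover have "(Inr (Inl (v, 0)), keyC m g x) \<in> ?R" using v True Inl
        by (auto simp: cyl_rel_iff keyC_def)
      ultimately have "(x, Inr (Inl (v, 0))) \<in> ?R \<union> ?R\<inverse>" "(Inr (Inl (v, 0)), keyC m g x) \<in> ?R \<union> ?R\<inverse>" by auto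
      then show ?thesis by (meson r_into_rtrancl rtrancl_trans)
    qed (use Inl in \<open>simp add: keyC_def\<close>)
  next
    case (Inr r)
    show ?thesis
    proof (cases r)
      case (Inl vt)
      obtain v t where vt: "vt = (v, t)" by fastforce
      have v: "v \<in> verts G" using x Inr Inl vt by (simp add: cyl_pre_verts)
      show ?thesis
      proof (cases "t = m")
        case True
        then have "(x, keyC m g x) \<in> ?R" using Inr Inl vt v by (auto simp: cyl_rel_iff keyC_def)
        then show ?thesis by blast
      next
        case False
        show ?thesis
        proof (cases "t = 0")
          case True
          then have "(x, keyC m g x) \<in> ?R" using Inr Inl vt v False by (auto simp: cyl_rel_iff keyC_def)
          then show ?thesis by blast
        qed (use Inr Inl vt False in \<open>simp add: keyC_def\<close>)
      qed
    next
      case (Inr k) then show ?thesis using \<open>x = Inr r\<close> by (simp add: keyC_def)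
    qed
  qed
qed

lemma mid_cls:
  assumes "y \<in> cyl_cls G G G id id p (Inr (Inl (v, t)))"
  shows "y = Inr (Inl (v, t)) \<or> (y = Inl v \<and> t = 0) \<or> (y = Inr (Inr v) \<and> t = p)"
proof -
  have "(Inr (Inl (v, t)), y) \<in> (cyl_rel G id id p \<union> (cyl_rel G id id p)\<inverse>)\<^sup>*"
    using assms by (simp add: cyl_cls_def gen_eqv_def)
  then have "posM p (Inr (Inl (v, t))) = posM p y"
    by (rule key_resp[rotated]) (auto simp: cyl_rel_iff posM_def)
  then show ?thesis by (auto simp: posM_def split: sum.splits)
qed

lemma mid_cls_self:
  assumes "v \<in> verts G" "t \<le> p"
  shows "Inr (Inl (v, t)) \<in> cyl_cls G G G id id p (Inr (Inl (v, t)))"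
  using assms by (simp add: cyl_cls_def gen_eqv_def cyl_pre_verts)


locale sq =
  fixes G :: "'g graph" and H :: "'h graph" and K :: "'k graph"
    and f :: "'g \<Rightarrow> 'h" and g :: "'g \<Rightarrow> 'k" and p q1 q2 :: nat
  assumes gG: "is_graph G" and gH: "is_graph H" and gK: "is_graph K"
    and fm: "graph_map G H f" and gm: "graph_map G K g"
    and h1: "1 \<le> q1 \<or> inj_on f (verts G)"
    and h2: "1 \<le> q2 \<or> inj_on g (verts G)"
    and h3: "1 \<le> q1 \<or> 1 \<le> q2"
begin

abbreviation "mB \<equiv> p + q1"
abbreviation "mC \<equiv> p + q2"
abbreviation "M \<equiv> p + q1 + q2"
abbreviation "PB \<equiv> cyl_pre G H G mB"
abbreviation "PC \<equiv> cyl_pre G G K mC"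
abbreviation "PD \<equiv> cyl_pre G H K M"
abbreviation "VB \<equiv> verts PB"
abbreviation "VC \<equiv> verts PC"
abbreviation "VD \<equiv> verts PD"
abbreviation "kB \<equiv> keyB mB f"
abbreviation "kC \<equiv> keyC mC g"
abbreviation "kD \<equiv> keyD M f g"
abbreviation "clB \<equiv> kcls VB kB"
abbreviation "clC \<equiv> kcls VC kC"
abbreviation "clD \<equiv> kcls VD kD"
abbreviation "A \<equiv> box G (interval p)"
abbreviation "B \<equiv> cyl G H G f id mB"
abbreviation "C \<equiv> cyl G G K id g mC"
abbreviation "D \<equiv> cyl G H K f g M"
abbreviation "a \<equiv> rmap G H G f id p mB \<circ> cyl_incl G p"
abbreviation "b \<equiv> lmap G G K id g p mC \<circ> cyl_incl G p"
abbreviation "c \<equiv> lmap G H K f g mB M"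
abbreviation "d \<equiv> rmap G H K f g mC M"

lemma M1: "1 \<le> M" using h3 by auto

lemma kerB: "kernel VB (cyl_rel G f id mB) kB" by (rule kernelB)
lemma kerC: "kernel VC (cyl_rel G id g mC) kC" by (rule kernelC)
lemma kerD: "kernel VD (cyl_rel G f g M) kD" by (rule kernelD[OF M1])

lemma vertsB: "verts B = clB ` VB" unfolding cyl_def using quot_verts[OF kerB] .
lemma vertsC: "verts C = clC ` VC" unfolding cyl_def using quot_verts[OF kerC] .
lemma vertsD: "verts D = clD ` VD" unfolding cyl_def using quot_verts[OF kerD] .

lemma edgeB: "edge B X Y \<longleftrightarrow> X \<in> clB ` VB \<and> Y \<in> clB ` VB \<and> (\<exists>x\<in>X. \<exists>y\<in>Y. edge PB x y)"
  unfolding cyl_def using quot_edge[OF kerB] .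
lemma edgeC: "edge C X Y \<longleftrightarrow> X \<in> clC ` VC \<and> Y \<in> clC ` VC \<and> (\<exists>x\<in>X. \<exists>y\<in>Y. edge PC x y)"
  unfolding cyl_def using quot_edge[OF kerC] .
lemma edgeD: "edge D X Y \<longleftrightarrow> X \<in> clD ` VD \<and> Y \<in> clD ` VD \<and> (\<exists>x\<in>X. \<exists>y\<in>Y. edge PD x y)"
  unfolding cyl_def using quot_edge[OF kerD] .

lemma clsB: "x \<in> VB \<Longrightarrow> cyl_cls G H G f id mB x = clB x"
  unfolding cyl_cls_def using kernel_cls[OF kerB] .
lemma clsC: "x \<in> VC \<Longrightarrow> cyl_cls G G K id g mC x = clC x"
  unfolding cyl_cls_def using kernel_cls[OF kerC] .
lemma clsD: "x \<in> VD \<Longrightarrow> cyl_cls G H K f g M x = clD x"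
  unfolding cyl_cls_def using kernel_cls[OF kerD] .

definition cr :: "'h + ('g \<times> nat) + 'g \<Rightarrow> 'h + ('g \<times> nat) + 'k" where
  "cr x = (case x of Inl h \<Rightarrow> Inl h | Inr (Inl (v, t)) \<Rightarrow> Inr (Inl (v, t)) | Inr (Inr v) \<Rightarrow> Inr (Inl (v, mB)))"

definition dr :: "'g + ('g \<times> nat) + 'k \<Rightarrow> 'h + ('g \<times> nat) + 'k" where
  "dr x = (case x of Inl v \<Rightarrow> Inr (Inl (v, q1)) | Inr (Inl (v, t)) \<Rightarrow> Inr (Inl (v, t + q1)) | Inr (Inr k) \<Rightarrow> Inr (Inr k))"

lemma cr_V: "x \<in> VB \<Longrightarrow> cr x \<in> VD"
  using fm by (auto simp: cr_def cyl_pre_verts graph_map_def split: sum.splits)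

lemma dr_V: "x \<in> VC \<Longrightarrow> dr x \<in> VD"
  using gm by (auto simp: dr_def cyl_pre_verts graph_map_def split: sum.splits)

lemma cr_key: "x \<in> VB \<Longrightarrow> y \<in> VB \<Longrightarrow> kD (cr x) = kD (cr y) \<longleftrightarrow> kB x = kB y"
  using h2 by (auto simp: cr_def keyB_def keyD_def cyl_pre_verts inj_on_def split: sum.splits if_splits)

lemma dr_key: "x \<in> VC \<Longrightarrow> y \<in> VC \<Longrightarrow> kD (dr x) = kD (dr y) \<longleftrightarrow> kC x = kC y"
  using h1 h3 by (auto simp: dr_def keyC_def keyD_def cyl_pre_verts inj_on_def split: sum.splits if_splits)


lemma kcls_self: "x \<in> V \<Longrightarrow> x \<in> kcls V \<kappa> x" by (simp add: kcls_def)

lemma kcls_rep: "x \<in> V \<Longrightarrow> y \<in> kcls V \<kappa> x \<Longrightarrow> kcls V \<kappa> y = kcls V \<kappa> x \<and> y \<in> V"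
  by (auto simp: kcls_def)

lemma c_raw: "c X = cyl_cls G H K f g M (cr (SOME y. y \<in> X))"
  by (simp add: lmap_def cr_def)

lemma Mq: "p + q1 + q2 - (p + q2) = q1" by simp

lemma d_raw: "d X = cyl_cls G H K f g M (dr (SOME y. y \<in> X))"
  unfolding rmap_def dr_def Mq ..

lemma c_cls: "x \<in> VB \<Longrightarrow> c (clB x) = clD (cr x)"
proof -
  assume x: "x \<in> VB"
  define y where "y = (SOME y. y \<in> clB x)"
  have y: "y \<in> VB" "kB y = kB x" using kcls_some[OF x] unfolding y_def by auto
  have "c (clB x) = cyl_cls G H K f g M (cr y)" using c_raw y_def by simp
  also have "\<dots> = clD (cr y)" using clsD cr_V y by blast
  also have "\<dots> = clD (cr x)" using kcls_eq[OF cr_V[OF y(1)] cr_V[OF x], of kD] cr_key[OF y(1) x] y by simp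
  finally show ?thesis .
qed

lemma d_cls: "x \<in> VC \<Longrightarrow> d (clC x) = clD (dr x)"
proof -
  assume x: "x \<in> VC"
  define y where "y = (SOME y. y \<in> clC x)"
  have y: "y \<in> VC" "kC y = kC x" using kcls_some[OF x] unfolding y_def by auto
  have "d (clC x) = cyl_cls G H K f g M (dr y)" using d_raw y_def by simp
  also have "\<dots> = clD (dr y)" using clsD dr_V y by blast
  also have "\<dots> = clD (dr x)" using kcls_eq[OF dr_V[OF y(1)] dr_V[OF x], of kD] dr_key[OF y(1) x] y by simp
  finally show ?thesis .
qed

lemma a_eq:
  assumes v: "v \<in> verts G" and t: "t \<le> p"
  shows "a (v, t) = clB (Inr (Inl (v, t + q1)))"
proof -
  define y where "y = (SOME y. y \<in> cyl_cls G G G id id p (Inr (Inl (v, t))))"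
  have "y \<in> cyl_cls G G G id id p (Inr (Inl (v, t)))"
    using mid_cls_self[OF v t] unfolding y_def by (rule someI)
  then have yc: "y = Inr (Inl (v, t)) \<or> (y = Inl v \<and> t = 0) \<or> (y = Inr (Inr v) \<and> t = p)" by (rule mid_cls)
  have "a (v, t) = cyl_cls G H G f id mB (case y of Inl v \<Rightarrow> Inr (Inl (v, mB - p))
      | Inr (Inl (v, t)) \<Rightarrow> Inr (Inl (v, t + (mB - p))) | Inr (Inr w) \<Rightarrow> Inr (Inr w))"
    by (simp add: rmap_def cyl_incl_def y_def)
  also have "\<dots> = clB (Inr (Inl (v, t + q1)))"
  proof -
    have vt: "Inr (Inl (v, t + q1)) \<in> VB" using v t by (simp add: cyl_pre_verts)
    from yc show ?thesis
    proof (elim disjE conjE)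
      assume "y = Inr (Inl (v, t))" then show ?thesis using clsB[OF vt] by simp
    next
      assume "y = Inl v" "t = 0" then show ?thesis using clsB[OF vt] by simp
    next
      assume yy: "y = Inr (Inr v)" "t = p"
      have w: "Inr (Inr v) \<in> VB" using v by (simp add: cyl_pre_verts)
      have "clB (Inr (Inr v)) = clB (Inr (Inl (v, t + q1)))"
        using kcls_eq[OF w vt, of kB] yy by (simp add: keyB_def)
      then show ?thesis using clsB[OF w] yy by simp
    qed
  qed
  finally show ?thesis .
qed

lemma b_eq:
  assumes v: "v \<in> verts G" and t: "t \<le> p"
  shows "b (v, t) = clC (Inr (Inl (v, t)))"
proof -
  define y where "y = (SOME y. y \<in> cyl_cls G G G id id p (Inr (Inl (v, t))))"
  have "y \<in> cyl_cls G G G id id p (Inr (Inl (v, t)))"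
    using mid_cls_self[OF v t] unfolding y_def by (rule someI)
  then have yc: "y = Inr (Inl (v, t)) \<or> (y = Inl v \<and> t = 0) \<or> (y = Inr (Inr v) \<and> t = p)" by (rule mid_cls)
  have "b (v, t) = cyl_cls G G K id g mC (case y of Inl h \<Rightarrow> Inl h
      | Inr (Inl (v, t)) \<Rightarrow> Inr (Inl (v, t)) | Inr (Inr v) \<Rightarrow> Inr (Inl (v, p)))"
    by (simp add: lmap_def cyl_incl_def y_def)
  also have "\<dots> = clC (Inr (Inl (v, t)))"
  proof -
    have vt: "Inr (Inl (v, t)) \<in> VC" using v t by (simp add: cyl_pre_verts)
    from yc show ?thesis
    proof (elim disjE conjE)
      assume "y = Inr (Inl (v, t))" then show ?thesis using clsC[OF vt] by simp
    next
      assume yy: "y = Inl v" "t = 0"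
      have w: "Inl v \<in> VC" using v by (simp add: cyl_pre_verts)
      have "clC (Inl v) = clC (Inr (Inl (v, t)))"
        using kcls_eq[OF w vt, of kC] yy by (simp add: keyC_def)
      then show ?thesis using clsC[OF w] yy by simp
    next
      assume yy: "y = Inr (Inr v)" "t = p"
      then show ?thesis using clsC[OF vt] by simp
    qed
  qed
  finally show ?thesis .
qed

lemma vertsA: "verts A = verts G \<times> {0..p}"
  by (simp add: box_def interval_def)

lemma edgeA: "edge A (v, t) (v', t') \<longleftrightarrow> (v = v' \<and> v \<in> verts G \<and> t \<le> p \<and> t' \<le> p \<and> (t = t' \<or> t = Suc t' \<or> t' = Suc t))
      \<or> (edge G v v' \<and> t = t' \<and> t \<le> p)"
  by (auto simp: box_def interval_def)

lemma gedge: "edge G v v' \<Longrightarrow> v \<in> verts G \<and> v' \<in> verts G"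
  using gG by (simp add: is_graph_def)

lemma cr_edge: "edge PB x y \<Longrightarrow> edge PD (cr x) (cr y)"
  using gedge by (auto simp: cyl_pre_edge cr_def split: sum.splits)

lemma dr_edge: "edge PC x y \<Longrightarrow> edge PD (dr x) (dr y)"
  using gedge by (auto simp: cyl_pre_edge dr_def split: sum.splits)

lemma comm: "x \<in> verts A \<Longrightarrow> c (a x) = d (b x)"
proof -
  assume "x \<in> verts A"
  then obtain v t where x: "x = (v, t)" "v \<in> verts G" "t \<le> p" by (auto simp: vertsA)
  have 1: "Inr (Inl (v, t + q1)) \<in> VB" "Inr (Inl (v, t)) \<in> VC" using x by (auto simp: cyl_pre_verts)
  show ?thesis using x a_eq b_eq c_cls[OF 1(1)] d_cls[OF 1(2)] by (simp add: cr_def dr_def)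
qed

lemma am: "graph_map A B a"
  unfolding graph_map_def
proof (intro conjI allI impI ballI)
  fix x assume "x \<in> verts A"
  then obtain v t where x: "x = (v, t)" "v \<in> verts G" "t \<le> p" by (auto simp: vertsA)
  then show "a x \<in> verts B" using a_eq vertsB by (auto simp: cyl_pre_verts)
next
  fix x y assume e: "edge A x y"
  obtain v t v' t' where xy: "x = (v, t)" "y = (v', t')" by fastforce
  have vv: "v \<in> verts G" "v' \<in> verts G" "t \<le> p" "t' \<le> p" using e xy gedge by (auto simp: edgeA)
  have m: "Inr (Inl (v, t + q1)) \<in> VB" "Inr (Inl (v', t' + q1)) \<in> VB" using vv by (auto simp: cyl_pre_verts)
  have "edge PB (Inr (Inl (v, t + q1))) (Inr (Inl (v', t' + q1)))"
    using e xy vv by (auto simp: edgeA cyl_pre_edge)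
  moreover have "Inr (Inl (v, t + q1)) \<in> clB (Inr (Inl (v, t + q1)))" "Inr (Inl (v', t' + q1)) \<in> clB (Inr (Inl (v', t' + q1)))"
    using m by (simp_all add: kcls_self)
  moreover have "a x = clB (Inr (Inl (v, t + q1)))" "a y = clB (Inr (Inl (v', t' + q1)))" using xy vv a_eq by auto
  ultimately show "edge B (a x) (a y)" using m unfolding edgeB by blast
qed

lemma bm: "graph_map A C b"
  unfolding graph_map_def
proof (intro conjI allI impI ballI)
  fix x assume "x \<in> verts A"
  then obtain v t where x: "x = (v, t)" "v \<in> verts G" "t \<le> p" by (auto simp: vertsA)
  then show "b x \<in> verts C" using b_eq vertsC by (auto simp: cyl_pre_verts)
next
  fix x y assume e: "edge A x y"
  obtain v t v' t' where xy: "x = (v, t)" "y = (v', t')" by fastforce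
  have vv: "v \<in> verts G" "v' \<in> verts G" "t \<le> p" "t' \<le> p" using e xy gedge by (auto simp: edgeA)
  have m: "Inr (Inl (v, t)) \<in> VC" "Inr (Inl (v', t')) \<in> VC" using vv by (auto simp: cyl_pre_verts)
  have "edge PC (Inr (Inl (v, t))) (Inr (Inl (v', t')))"
    using e xy vv by (auto simp: edgeA cyl_pre_edge)
  moreover have "Inr (Inl (v, t)) \<in> clC (Inr (Inl (v, t)))" "Inr (Inl (v', t')) \<in> clC (Inr (Inl (v', t')))"
    using m by (simp_all add: kcls_self)
  moreover have "b x = clC (Inr (Inl (v, t)))" "b y = clC (Inr (Inl (v', t')))" using xy vv b_eq by auto
  ultimately show "edge C (b x) (b y)" using m unfolding edgeC by blast
qed

lemma cm: "graph_map B D c"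
  unfolding graph_map_def
proof (intro conjI allI impI ballI)
  fix X assume "X \<in> verts B"
  then obtain x where "x \<in> VB" "X = clB x" using vertsB by auto
  then show "c X \<in> verts D" using c_cls cr_V vertsD by auto
next
  fix X Y assume e: "edge B X Y"
  then obtain x0 y0 x y where xy: "x0 \<in> VB" "y0 \<in> VB" "X = clB x0" "Y = clB y0" "x \<in> X" "y \<in> Y" "edge PB x y"
    unfolding edgeB by blast
  have r1: "clB x = X \<and> x \<in> VB" using kcls_rep[OF xy(1), of x] xy(3,5) by simp
  have r2: "clB y = Y \<and> y \<in> VB" using kcls_rep[OF xy(2), of y] xy(4,6) by simp
  have e1: "c X = clD (cr x)" using c_cls r1 by metis
  have e2: "c Y = clD (cr y)" using c_cls r2 by metis
  have "cr x \<in> clD (cr x)" "cr y \<in> clD (cr y)" using cr_V r1 r2 by (simp_all add: kcls_self)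
  moreover have "clD (cr x) \<in> clD ` VD" "clD (cr y) \<in> clD ` VD" using cr_V r1 r2 by auto
  ultimately show "edge D (c X) (c Y)" unfolding edgeD e1 e2
    using cr_edge[OF xy(7)] by blast
qed

lemma dm: "graph_map C D d"
  unfolding graph_map_def
proof (intro conjI allI impI ballI)
  fix X assume "X \<in> verts C"
  then obtain x where "x \<in> VC" "X = clC x" using vertsC by auto
  then show "d X \<in> verts D" using d_cls dr_V vertsD by auto
next
  fix X Y assume e: "edge C X Y"
  then obtain x0 y0 x y where xy: "x0 \<in> VC" "y0 \<in> VC" "X = clC x0" "Y = clC y0" "x \<in> X" "y \<in> Y" "edge PC x y"
    unfolding edgeC by blast
  have r1: "clC x = X \<and> x \<in> VC" using kcls_rep[OF xy(1), of x] xy(3,5) by simp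
  have r2: "clC y = Y \<and> y \<in> VC" using kcls_rep[OF xy(2), of y] xy(4,6) by simp
  have e1: "d X = clD (dr x)" using d_cls r1 by metis
  have e2: "d Y = clD (dr y)" using d_cls r2 by metis
  have "dr x \<in> clD (dr x)" "dr y \<in> clD (dr y)" using dr_V r1 r2 by (simp_all add: kcls_self)
  moreover have "clD (dr x) \<in> clD ` VD" "clD (dr y) \<in> clD ` VD" using dr_V r1 r2 by auto
  ultimately show "edge D (d X) (d Y)" unfolding edgeD e1 e2
    using dr_edge[OF xy(7)] by blast
qed

lemma injc: "inj_on c (verts B)"
proof (rule inj_onI)
  fix X Y assume X: "X \<in> verts B" and Y: "Y \<in> verts B" and e: "c X = c Y"
  obtain x where x: "x \<in> VB" "X = clB x" using X vertsB by auto
  obtain y where y: "y \<in> VB" "Y = clB y" using Y vertsB by auto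
  have "clD (cr x) = clD (cr y)" using e x y c_cls by simp
  then have "kD (cr x) = kD (cr y)" using kcls_eq[OF cr_V[OF x(1)] cr_V[OF y(1)], of kD] by simp
  then have "kB x = kB y" using cr_key x y by simp
  then show "X = Y" using kcls_eq[OF x(1) y(1), of kB] x y by simp
qed

lemma injd: "inj_on d (verts C)"
proof (rule inj_onI)
  fix X Y assume X: "X \<in> verts C" and Y: "Y \<in> verts C" and e: "d X = d Y"
  obtain x where x: "x \<in> VC" "X = clC x" using X vertsC by auto
  obtain y where y: "y \<in> VC" "Y = clC y" using Y vertsC by auto
  have "clD (dr x) = clD (dr y)" using e x y d_cls by simp
  then have "kD (dr x) = kD (dr y)" using kcls_eq[OF dr_V[OF x(1)] dr_V[OF y(1)], of kD] by simp
  then have "kC x = kC y" using dr_key x y by simp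
  then show "X = Y" using kcls_eq[OF x(1) y(1), of kC] x y by simp
qed

end

definition ham :: "bool list \<Rightarrow> bool list \<Rightarrow> nat" where
  "ham x y = card {i. i < length x \<and> x!i \<noteq> y!i}"

lemma ham_le: "ham x y \<le> length x"
proof -
  have "{i. i < length x \<and> x!i \<noteq> y!i} \<subseteq> {0..<length x}" by auto
  then show ?thesis unfolding ham_def by (metis card_atLeastLessThan card_mono finite_atLeastLessThan minus_nat.diff_0)
qed

lemma ham_sym: "length x = length y \<Longrightarrow> ham x y = ham y x"
  unfolding ham_def by (metis (no_types, lifting))

lemma ham_all:
  assumes "ham x y = length x" "i < length x" shows "x!i \<noteq> y!i"
proof (rule ccontr)
  assume "\<not> x!i \<noteq> y!i"
  then have "{j. j < length x \<and> x!j \<noteq> y!j} \<subseteq> {0..<length x} - {i}" using assms(2) by auto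
  then have "ham x y \<le> card ({0..<length x} - {i})" unfolding ham_def by (intro card_mono) auto
  also have "\<dots> = length x - 1" using assms(2) by simp
  finally show False using assms by simp
qed

lemma ham_lt:
  assumes "i < length x" "x!i = y!i" shows "ham x y < length x"
proof -
  have "{j. j < length x \<and> x!j \<noteq> y!j} \<subseteq> {0..<length x} - {i}" using assms by auto
  then have "ham x y \<le> card ({0..<length x} - {i})" unfolding ham_def by (intro card_mono) auto
  also have "\<dots> = length x - 1" using assms(1) by simp
  finally show ?thesis using assms(1) by simp
qed

lemma ham0: "length x = length y \<Longrightarrow> ham x y = 0 \<Longrightarrow> x = y"
  unfolding ham_def by (auto intro!: nth_equalityI)

lemma lip:
  assumes lipa: "\<And>x y. edge (cube_graph m) x y \<Longrightarrow> \<phi> x \<le> \<phi> y + 1"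
  shows "length x = m \<Longrightarrow> length y = m \<Longrightarrow> \<phi> x \<le> \<phi> y + ham x y"
proof (induction "ham x y" arbitrary: x)
  case 0
  then show ?case using ham0[of x y] by simp
next
  case (Suc k)
  then have "{i. i < length x \<and> x!i \<noteq> y!i} \<noteq> {}" unfolding ham_def by (metis card.empty nat.distinct(1))
  then obtain i where i: "i < length x" "x!i \<noteq> y!i" by auto
  define x' where "x' = x[i := y!i]"
  have S: "{j. j < length x' \<and> x'!j \<noteq> y!j} = {j. j < length x \<and> x!j \<noteq> y!j} - {i}"
    using i by (auto simp: x'_def nth_list_update)
  have "ham x' y = k" using Suc(2) i unfolding ham_def S by (simp add: card_Diff_singleton)
  moreover have "length x' = m" using Suc by (simp add: x'_def)
  ultimately have "\<phi> x' \<le> \<phi> y + k" using Suc by metis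
  moreover have "edge (cube_graph m) x x'"
    unfolding cedge_iff using Suc(3) i by (auto simp: x'_def nth_list_update)
  ultimately show ?case using lipa Suc(2) by fastforce
qed

lemma corner_top:
  assumes lipa: "\<And>x y. edge (cube_graph m) x y \<Longrightarrow> \<phi> x \<le> \<phi> y + 1"
    and l: "length y = m" "length x0 = m" and big: "\<phi> x0 + m \<le> \<phi> y"
    and e: "edge (cube_graph m) y y'" and ne: "y' \<noteq> y"
  shows "\<phi> y' < \<phi> y"
proof -
  have "\<phi> y \<le> \<phi> x0 + ham y x0" using lip[where \<phi>=\<phi>, OF lipa l] .
  then have hm: "ham y x0 = m" using ham_le[of y x0] l big by simp
  have ly': "length y' = m" using e by (simp add: cedge_iff)
  have "\<exists>i<m. y'!i \<noteq> y!i"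
  proof (rule ccontr)
    assume "\<not> (\<exists>i<m. y'!i \<noteq> y!i)"
    then have "y' = y" using ly' l by (auto intro!: nth_equalityI)
    with ne show False by simp
  qed
  then obtain i where i: "i < m" "y'!i \<noteq> y!i" by blast
  have "y!i \<noteq> x0!i" using ham_all[of y x0 i] hm l i by simp
  then have "y'!i = x0!i" using i by auto
  then have "ham y' x0 < m" using ham_lt[of i y' x0] i ly' by simp
  moreover have "\<phi> y' \<le> \<phi> x0 + ham y' x0" using lip[where \<phi>=\<phi>, OF lipa ly' l(2)] .
  ultimately show ?thesis using big by linarith
qed

lemma corner_bot:
  assumes lipa: "\<And>x y. edge (cube_graph m) x y \<Longrightarrow> \<phi> x \<le> \<phi> y + 1"
    and l: "length y = m" "length x1 = m" and big: "\<phi> y + m \<le> \<phi> x1"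
    and e: "edge (cube_graph m) y y'" and ne: "y' \<noteq> y"
  shows "\<phi> y < \<phi> y'"
proof -
  have "\<phi> x1 \<le> \<phi> y + ham x1 y" using lip[where \<phi>=\<phi>, OF lipa l(2) l(1)] .
  then have hm: "ham x1 y = m" using ham_le[of x1 y] l big by simp
  have ly': "length y' = m" using e by (simp add: cedge_iff)
  have "\<exists>i<m. y'!i \<noteq> y!i"
  proof (rule ccontr)
    assume "\<not> (\<exists>i<m. y'!i \<noteq> y!i)"
    then have "y' = y" using ly' l by (auto intro!: nth_equalityI)
    with ne show False by simp
  qed
  then obtain i where i: "i < m" "y'!i \<noteq> y!i" by blast
  have "x1!i \<noteq> y!i" using ham_all[of x1 y i] hm l i by simp
  then have "x1!i = y'!i" using i by auto
  then have "ham x1 y' < m" using ham_lt[of i x1 y'] i l by simp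
  moreover have "\<phi> x1 \<le> \<phi> y' + ham x1 y'" using lip[where \<phi>=\<phi>, OF lipa l(2) ly'] .
  ultimately show ?thesis using big by linarith
qed

lemma spread:
  assumes lipa: "\<And>x y. edge (cube_graph m) x y \<Longrightarrow> \<phi> x \<le> \<phi> y + 1"
    and l: "length x = m" "length y = m"
  shows "\<phi> x \<le> \<phi> y + m"
  using lip[where \<phi>=\<phi>, OF lipa l] ham_le[of x y] l by simp

lemma neighbor:
  assumes "length y = m" "1 \<le> m"
  shows "\<exists>y'. edge (cube_graph m) y y' \<and> y' \<noteq> y"
proof -
  define y' where "y' = y[0 := \<not> y!0]"
  have "edge (cube_graph m) y y'" unfolding cedge_iff using assms by (auto simp: y'_def nth_list_update)
  moreover have "y' \<noteq> y" using assms by (metis One_nat_def le_less_trans less_one not_le y'_def nth_list_update_eq)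
  ultimately show ?thesis by blast
qed


lemma cyl3_exhaust:
  obtains (L) h where "x = Inl h" | (M) v t where "x = Inr (Inl (v, t))" | (R) k where "x = Inr (Inr k)"
  by (metis obj_sumE surj_pair)

lemma cpe_simps[simp]:
  "edge (cyl_pre G H K m) (Inl a) (Inl b) = edge H a b"
  "edge (cyl_pre G H K m) (Inr (Inl (v, t))) (Inr (Inl (v', t'))) =
     ((v = v' \<and> v \<in> verts G \<and> t \<le> m \<and> t' \<le> m \<and> (t = t' \<or> t = Suc t' \<or> t' = Suc t))
      \<or> (edge G v v' \<and> t = t' \<and> t \<le> m))"
  "edge (cyl_pre G H K m) (Inr (Inr k)) (Inr (Inr k')) = edge K k k'"
  "edge (cyl_pre G H K m) (Inl a) (Inr r) = False"
  "edge (cyl_pre G H K m) (Inr r) (Inl a) = False"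
  "edge (cyl_pre G H K m) (Inr (Inl vt)) (Inr (Inr k)) = False"
  "edge (cyl_pre G H K m) (Inr (Inr k)) (Inr (Inl vt)) = False"
  by (auto simp: cyl_pre_edge split: prod.splits sum.splits)

lemma cpv_simps[simp]:
  "Inl h \<in> verts (cyl_pre G H K m) \<longleftrightarrow> h \<in> verts H"
  "Inr (Inl (v, t)) \<in> verts (cyl_pre G H K m) \<longleftrightarrow> v \<in> verts G \<and> t \<le> m"
  "Inr (Inr k) \<in> verts (cyl_pre G H K m) \<longleftrightarrow> k \<in> verts K"
  by (auto simp: cyl_pre_verts)

context sq
begin

definition levD :: "'h + ('g \<times> nat) + 'k \<Rightarrow> nat" where
  "levD x = (case x of Inl _ \<Rightarrow> 0 | Inr (Inl (v, t)) \<Rightarrow> t | Inr (Inr _) \<Rightarrow> M)"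

definition levc :: "('h + ('g \<times> nat) + 'k) set \<Rightarrow> nat" where
  "levc X = levD (SOME x. x \<in> X)"

lemma levD_key: "x \<in> VD \<Longrightarrow> y \<in> VD \<Longrightarrow> kD x = kD y \<Longrightarrow> levD x = levD y"
  by (auto simp: keyD_def levD_def cyl_pre_verts split: sum.splits if_splits)

lemma levc_cls: "x \<in> VD \<Longrightarrow> y \<in> clD x \<Longrightarrow> levD y = levc (clD x)"
proof -
  assume x: "x \<in> VD" and y: "y \<in> clD x"
  have s: "(SOME y. y \<in> clD x) \<in> VD" "kD (SOME y. y \<in> clD x) = kD x" using kcls_some[OF x] by auto
  have "y \<in> VD" "kD y = kD x" using y by (auto simp: kcls_def)
  then show ?thesis unfolding levc_def using levD_key s by metis
qed

lemma levc_cls': "x \<in> VD \<Longrightarrow> levc (clD x) = levD x"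
  using levc_cls kcls_self by metis

lemma levD_edge: "edge PD x y \<Longrightarrow> levD x \<le> levD y + 1"
  by (cases x rule: cyl3_exhaust; cases y rule: cyl3_exhaust) (auto simp: levD_def)

lemma levD_le: "x \<in> VD \<Longrightarrow> levD x \<le> M"
  by (auto simp: cyl_pre_verts levD_def split: sum.splits)

lemma edgeD_wit:
  assumes "edge D X Y"
  obtains x y where "x \<in> VD" "y \<in> VD" "X = clD x" "Y = clD y" "edge PD x y"
proof -
  obtain x0 y0 x y where xy: "x0 \<in> VD" "y0 \<in> VD" "X = clD x0" "Y = clD y0" "x \<in> X" "y \<in> Y" "edge PD x y"
    using assms unfolding edgeD by blast
  have "clD x = X \<and> x \<in> VD" using kcls_rep[OF xy(1), of x] xy(3,5) by simp
  moreover have "clD y = Y \<and> y \<in> VD" using kcls_rep[OF xy(2), of y] xy(4,6) by simp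
  ultimately show ?thesis using that xy(7) by metis
qed

lemma levc_edge: "edge D X Y \<Longrightarrow> levc X \<le> levc Y + 1"
proof -
  assume "edge D X Y"
  then obtain x y where "x \<in> VD" "y \<in> VD" "X = clD x" "Y = clD y" "edge PD x y" by (rule edgeD_wit)
  then show ?thesis using levc_cls' levD_edge by simp
qed

lemma levc_le: "X \<in> verts D \<Longrightarrow> levc X \<le> M"
  using vertsD levc_cls' levD_le by auto

lemma rawtop: "edge PD x y \<Longrightarrow> levD x = M \<Longrightarrow> levD y < M \<Longrightarrow> \<exists>v. x = Inr (Inl (v, M)) \<and> v \<in> verts G"
  using M1 gedge by (auto simp: cyl_pre_edge levD_def split: sum.splits)

lemma rawbot: "edge PD x y \<Longrightarrow> levD x = 0 \<Longrightarrow> 0 < levD y \<Longrightarrow> \<exists>v. x = Inr (Inl (v, 0)) \<and> v \<in> verts G"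
  using M1 gedge by (auto simp: cyl_pre_edge levD_def split: sum.splits)

definition unc :: "'h + ('g \<times> nat) + 'k \<Rightarrow> 'h + ('g \<times> nat) + 'g" where
  "unc x = (case x of Inl h \<Rightarrow> Inl h | Inr (Inl vt) \<Rightarrow> Inr (Inl vt) | Inr (Inr k) \<Rightarrow> undefined)"

definition und :: "'h + ('g \<times> nat) + 'k \<Rightarrow> 'g + ('g \<times> nat) + 'k" where
  "und x = (case x of Inl h \<Rightarrow> undefined | Inr (Inl (v, t)) \<Rightarrow> Inr (Inl (v, t - q1)) | Inr (Inr k) \<Rightarrow> Inr (Inr k))"

lemma unc_ok: "x \<in> VD \<Longrightarrow> levD x \<le> mB \<Longrightarrow> (\<forall>k. x \<noteq> Inr (Inr k)) \<Longrightarrow> unc x \<in> VB \<and> cr (unc x) = x"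
  by (auto simp: unc_def cr_def cyl_pre_verts levD_def split: sum.splits)

lemma und_ok: "x \<in> VD \<Longrightarrow> q1 \<le> levD x \<Longrightarrow> (\<forall>h. x \<noteq> Inl h) \<Longrightarrow> und x \<in> VC \<and> dr (und x) = x"
  by (auto simp: und_def dr_def cyl_pre_verts levD_def split: sum.splits)

lemma EBraw:
  assumes "edge PD x y" "x \<in> VD" "y \<in> VD" "levD x \<le> mB" "levD y \<le> mB" "\<not> (levD x = M \<and> levD y = M)"
  shows "unc x \<in> VB \<and> unc y \<in> VB \<and> cr (unc x) = x \<and> cr (unc y) = y \<and> edge PB (unc x) (unc y)"
proof -
  have nk: "(\<forall>k. x \<noteq> Inr (Inr k)) \<and> (\<forall>k. y \<noteq> Inr (Inr k))"
    using assms(1,6) by (auto simp: cyl_pre_edge levD_def split: sum.splits)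
  then show ?thesis using unc_ok assms
    by (auto simp: unc_def cyl_pre_edge levD_def split: sum.splits)
qed

lemma ECraw:
  assumes "edge PD x y" "x \<in> VD" "y \<in> VD" "q1 \<le> levD x" "q1 \<le> levD y" "\<not> (levD x = 0 \<and> levD y = 0)"
  shows "und x \<in> VC \<and> und y \<in> VC \<and> dr (und x) = x \<and> dr (und y) = y \<and> edge PC (und x) (und y)"
proof -
  have nk: "(\<forall>h. x \<noteq> Inl h) \<and> (\<forall>h. y \<noteq> Inl h)"
    using assms(1,6) by (auto simp: cyl_pre_edge levD_def split: sum.splits)
  then show ?thesis using und_ok assms
    by (auto simp: und_def cyl_pre_edge levD_def split: sum.splits)
qed

lemma reflB: "w \<in> VB \<Longrightarrow> edge PB w w"
  using gG gH by (auto simp: cyl_pre_edge cyl_pre_verts is_graph_def split: sum.splits)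

lemma reflC: "w \<in> VC \<Longrightarrow> edge PC w w"
  using gG gK by (auto simp: cyl_pre_edge cyl_pre_verts is_graph_def split: sum.splits)

lemma cr_lev: "w \<in> VB \<Longrightarrow> levD (cr w) \<le> mB"
  by (auto simp: cr_def levD_def cyl_pre_verts split: sum.splits)

lemma dr_lev: "w \<in> VC \<Longrightarrow> q1 \<le> levD (dr w)"
  by (auto simp: dr_def levD_def cyl_pre_verts split: sum.splits)

end

context sq
begin

lemma clD_of_mem: "x \<in> VD \<Longrightarrow> x' \<in> clD x \<Longrightarrow> clD x' = clD x \<and> x' \<in> VD"
  using kcls_rep by metis

lemma liftvB:
  assumes X: "X \<in> verts D" and lX: "levc X \<le> mB" and top: "levc X = M \<Longrightarrow> \<exists>Y. edge D X Y \<and> levc Y < M"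
  shows "\<exists>z\<in>verts B. c z = X"
proof -
  obtain x where x: "x \<in> VD" "X = clD x" using X vertsD by auto
  have "\<exists>x'\<in>X. \<exists>w\<in>VB. cr w = x'"
  proof (cases x rule: cyl3_exhaust)
    case (L h)
    then show ?thesis using x kcls_self[OF x(1)] by (intro bexI[of _ x] bexI[of _ "Inl h"]) (auto simp: cr_def)
  next
    case (M v t)
    have "t \<le> mB" using lX x levc_cls' M by (simp add: levD_def)
    then show ?thesis using x kcls_self[OF x(1)] M
      by (intro bexI[of _ x] bexI[of _ "Inr (Inl (v, t))"]) (auto simp: cr_def)
  next
    case (R k)
    have lm: "levc X = M" using x levc_cls' R by (simp add: levD_def)
    then obtain Y where Y: "edge D X Y" "levc Y < M" using top by blast
    obtain x' y' where w: "x' \<in> VD" "y' \<in> VD" "X = clD x'" "Y = clD y'" "edge PD x' y'"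
      using edgeD_wit[OF Y(1)] by metis
    have "levD x' = M" "levD y' < M" using w lm Y levc_cls' by auto
    then obtain v where v: "x' = Inr (Inl (v, M))" "v \<in> verts G" using rawtop w(5) by blast
    have "M \<le> mB" using lm lX by simp
    then show ?thesis using v w kcls_self[OF w(1)]
      by (intro bexI[of _ x'] bexI[of _ "Inr (Inl (v, M))"]) (auto simp: cr_def)
  qed
  then obtain x' w where xw: "x' \<in> X" "w \<in> VB" "cr w = x'" by blast
  have "clD x' = X" using clD_of_mem[OF x(1)] xw x by auto
  then show ?thesis using c_cls[OF xw(2)] xw vertsB by auto
qed

lemma liftvC:
  assumes X: "X \<in> verts D" and lX: "q1 \<le> levc X" and bot: "levc X = 0 \<Longrightarrow> \<exists>Y. edge D X Y \<and> 0 < levc Y"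
  shows "\<exists>z\<in>verts C. d z = X"
proof -
  obtain x where x: "x \<in> VD" "X = clD x" using X vertsD by auto
  have "\<exists>x'\<in>X. \<exists>w\<in>VC. dr w = x'"
  proof (cases x rule: cyl3_exhaust)
    case (L h)
    have lm: "levc X = 0" using x levc_cls' L by (simp add: levD_def)
    then obtain Y where Y: "edge D X Y" "0 < levc Y" using bot by blast
    obtain x' y' where w: "x' \<in> VD" "y' \<in> VD" "X = clD x'" "Y = clD y'" "edge PD x' y'"
      using edgeD_wit[OF Y(1)] by metis
    have "levD x' = 0" "0 < levD y'" using w lm Y levc_cls' by auto
    then obtain v where v: "x' = Inr (Inl (v, 0))" "v \<in> verts G" using rawbot w(5) by blast
    have "q1 = 0" using lm lX by simp
    then have "dr (Inr (Inl (v, 0))) = x'" using v unfolding dr_def by simp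
    moreover have "Inr (Inl (v, 0)) \<in> VC" using v by simp
    moreover have "x' \<in> X" using w kcls_self[OF w(1)] by simp
    ultimately show ?thesis by blast
  next
    case (M v t)
    have "q1 \<le> t" "t \<le> M" using lX x levc_cls' M by (auto simp: levD_def)
    then show ?thesis using x kcls_self[OF x(1)] M
      by (intro bexI[of _ x] bexI[of _ "Inr (Inl (v, t - q1))"]) (auto simp: dr_def)
  next
    case (R k)
    then show ?thesis using x kcls_self[OF x(1)] by (intro bexI[of _ x] bexI[of _ "Inr (Inr k)"]) (auto simp: dr_def)
  qed
  then obtain x' w where xw: "x' \<in> X" "w \<in> VC" "dr w = x'" by blast
  have "clD x' = X" using clD_of_mem[OF x(1)] xw x by auto
  then show ?thesis using d_cls[OF xw(2)] xw vertsC by auto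
qed

lemma liftEB:
  assumes z: "z1 \<in> verts B" "z2 \<in> verts B" and e: "edge D (c z1) (c z2)"
    and nt: "z1 \<noteq> z2 \<Longrightarrow> \<not> (levc (c z1) = M \<and> levc (c z2) = M)"
  shows "edge B z1 z2"
proof -
  obtain w1 where w1: "w1 \<in> VB" "z1 = clB w1" using z vertsB by auto
  obtain w2 where w2: "w2 \<in> VB" "z2 = clB w2" using z vertsB by auto
  show ?thesis
  proof (cases "z1 = z2")
    case True
    then show ?thesis unfolding edgeB using w1 w2 reflB[OF w1(1)] kcls_self[OF w1(1)] by blast
  next
    case False
    have cz: "c z1 = clD (cr w1)" "c z2 = clD (cr w2)" using c_cls w1 w2 by simp_all
    obtain x y where xy: "x \<in> VD" "y \<in> VD" "c z1 = clD x" "c z2 = clD y" "edge PD x y"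
      by (rule edgeD_wit[OF e])
    have k1: "kD x = kD (cr w1)" using kcls_eq[OF xy(1) cr_V[OF w1(1)], of kD] xy(3) cz(1) by simp
    have k2: "kD y = kD (cr w2)" using kcls_eq[OF xy(2) cr_V[OF w2(1)], of kD] xy(4) cz(2) by simp
    have lx: "levD x = levD (cr w1)" "levD y = levD (cr w2)"
      using levD_key[OF xy(1) cr_V[OF w1(1)] k1] levD_key[OF xy(2) cr_V[OF w2(1)] k2] by simp_all
    have l: "levD x \<le> mB" "levD y \<le> mB" using lx cr_lev w1 w2 by auto
    have "levc (c z1) = levD x" "levc (c z2) = levD y" using xy levc_cls' by simp_all
    then have "\<not> (levD x = M \<and> levD y = M)" using nt False by simp
    then have r: "unc x \<in> VB \<and> unc y \<in> VB \<and> cr (unc x) = x \<and> cr (unc y) = y \<and> edge PB (unc x) (unc y)"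
      using EBraw[OF xy(5) xy(1) xy(2) l(1) l(2)] by blast
    have "kB (unc x) = kB w1" using cr_key[of "unc x" w1] r k1 w1 by simp
    then have "unc x \<in> z1" using r w1 by (simp add: kcls_def)
    moreover have "kB (unc y) = kB w2" using cr_key[of "unc y" w2] r k2 w2 by simp
    then have "unc y \<in> z2" using r w2 by (simp add: kcls_def)
    ultimately show ?thesis unfolding edgeB using z vertsB r by blast
  qed
qed

lemma liftEC:
  assumes z: "z1 \<in> verts C" "z2 \<in> verts C" and e: "edge D (d z1) (d z2)"
    and nt: "z1 \<noteq> z2 \<Longrightarrow> \<not> (levc (d z1) = 0 \<and> levc (d z2) = 0)"
  shows "edge C z1 z2"
proof -
  obtain w1 where w1: "w1 \<in> VC" "z1 = clC w1" using z vertsC by auto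
  obtain w2 where w2: "w2 \<in> VC" "z2 = clC w2" using z vertsC by auto
  show ?thesis
  proof (cases "z1 = z2")
    case True
    then show ?thesis unfolding edgeC using w1 w2 reflC[OF w1(1)] kcls_self[OF w1(1)] by blast
  next
    case False
    have cz: "d z1 = clD (dr w1)" "d z2 = clD (dr w2)" using d_cls w1 w2 by simp_all
    obtain x y where xy: "x \<in> VD" "y \<in> VD" "d z1 = clD x" "d z2 = clD y" "edge PD x y"
      by (rule edgeD_wit[OF e])
    have k1: "kD x = kD (dr w1)" using kcls_eq[OF xy(1) dr_V[OF w1(1)], of kD] xy(3) cz(1) by simp
    have k2: "kD y = kD (dr w2)" using kcls_eq[OF xy(2) dr_V[OF w2(1)], of kD] xy(4) cz(2) by simp
    have lx: "levD x = levD (dr w1)" "levD y = levD (dr w2)"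
      using levD_key[OF xy(1) dr_V[OF w1(1)] k1] levD_key[OF xy(2) dr_V[OF w2(1)] k2] by simp_all
    have l: "q1 \<le> levD x" "q1 \<le> levD y" using lx dr_lev w1 w2 by auto
    have "levc (d z1) = levD x" "levc (d z2) = levD y" using xy levc_cls' by simp_all
    then have "\<not> (levD x = 0 \<and> levD y = 0)" using nt False by simp
    then have r: "und x \<in> VC \<and> und y \<in> VC \<and> dr (und x) = x \<and> dr (und y) = y \<and> edge PC (und x) (und y)"
      using ECraw[OF xy(5) xy(1) xy(2) l(1) l(2)] by blast
    have "kC (und x) = kC w1" using dr_key[of "und x" w1] r k1 w1 by simp
    then have "und x \<in> z1" using r w1 by (simp add: kcls_def)
    moreover have "kC (und y) = kC w2" using dr_key[of "und y" w2] r k2 w2 by simp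
    then have "und y \<in> z2" using r w2 by (simp add: kcls_def)
    ultimately show ?thesis unfolding edgeC using z vertsC r by blast
  qed
qed

end

context sq
begin

lemma cube_sym: "edge (cube_graph m) x y \<Longrightarrow> edge (cube_graph m) y x"
  unfolding cedge_iff by metis

lemma liftB_gen:
  assumes e: "e \<in> cubes D m"
    and low: "\<And>x. length x = m \<Longrightarrow> levc (e x) \<le> mB"
    and topc: "\<And>y y'. length y = m \<Longrightarrow> levc (e y) = M \<Longrightarrow> 1 \<le> m \<and> (edge (cube_graph m) y y' \<longrightarrow> y' \<noteq> y \<longrightarrow> levc (e y') < M)"
  shows "\<exists>e'\<in>cubes B m. \<forall>x. length x = m \<longrightarrow> c (e' x) = e x"
proof -
  have ex: "\<exists>z. z \<in> verts B \<and> c z = e x" if x: "length x = m" for x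
  proof -
    have "\<exists>Y. edge D (e x) Y \<and> levc Y < M" if lm: "levc (e x) = M"
    proof -
      obtain y' where "edge (cube_graph m) x y'" "y' \<noteq> x" using neighbor[OF x] topc[OF x lm] by blast
      then show ?thesis using topc[OF x lm] cubesD(2)[OF e] by blast
    qed
    then have "\<exists>z\<in>verts B. c z = e x" by (rule liftvB[OF cubesD(1)[OF e x] low[OF x]])
    then show ?thesis by blast
  qed
  define e' where "e' x = (if length x = m then (SOME z. z \<in> verts B \<and> c z = e x) else undefined)" for x
  have e'p: "e' x \<in> verts B \<and> c (e' x) = e x" if "length x = m" for x
    using someI_ex[OF ex[OF that]] that by (simp add: e'_def)
  have "e' \<in> cubes B m"
  proof (rule cubesI)
    fix x y assume xy: "edge (cube_graph m) x y"
    then have l: "length x = m" "length y = m" by (auto simp: cedge_iff)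
    show "edge B (e' x) (e' y)"
    proof (rule liftEB)
      show "e' x \<in> verts B" "e' y \<in> verts B" using e'p l by auto
      show "edge D (c (e' x)) (c (e' y))" using e'p l cubesD(2)[OF e xy] by simp
      assume ne: "e' x \<noteq> e' y"
      then have "x \<noteq> y" by auto
      show "\<not> (levc (c (e' x)) = M \<and> levc (c (e' y)) = M)"
      proof
        assume "levc (c (e' x)) = M \<and> levc (c (e' y)) = M"
        then have "levc (e x) = M" "levc (e y) = M" using e'p l by auto
        then show False using topc[OF l(1), of y] xy \<open>x \<noteq> y\<close> by auto
      qed
    qed
  qed (use e'p in \<open>auto simp: e'_def\<close>)
  then show ?thesis using e'p by blast
qed

lemma liftC_gen:
  assumes e: "e \<in> cubes D m"
    and high: "\<And>x. length x = m \<Longrightarrow> q1 \<le> levc (e x)"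
    and botc: "\<And>y y'. length y = m \<Longrightarrow> levc (e y) = 0 \<Longrightarrow> 1 \<le> m \<and> (edge (cube_graph m) y y' \<longrightarrow> y' \<noteq> y \<longrightarrow> 0 < levc (e y'))"
  shows "\<exists>e'\<in>cubes C m. \<forall>x. length x = m \<longrightarrow> d (e' x) = e x"
proof -
  have ex: "\<exists>z. z \<in> verts C \<and> d z = e x" if x: "length x = m" for x
  proof -
    have "\<exists>Y. edge D (e x) Y \<and> 0 < levc Y" if lm: "levc (e x) = 0"
    proof -
      obtain y' where "edge (cube_graph m) x y'" "y' \<noteq> x" using neighbor[OF x] botc[OF x lm] by blast
      then show ?thesis using botc[OF x lm] cubesD(2)[OF e] by blast
    qed
    then have "\<exists>z\<in>verts C. d z = e x" by (rule liftvC[OF cubesD(1)[OF e x] high[OF x]])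
    then show ?thesis by blast
  qed
  define e' where "e' x = (if length x = m then (SOME z. z \<in> verts C \<and> d z = e x) else undefined)" for x
  have e'p: "e' x \<in> verts C \<and> d (e' x) = e x" if "length x = m" for x
    using someI_ex[OF ex[OF that]] that by (simp add: e'_def)
  have "e' \<in> cubes C m"
  proof (rule cubesI)
    fix x y assume xy: "edge (cube_graph m) x y"
    then have l: "length x = m" "length y = m" by (auto simp: cedge_iff)
    show "edge C (e' x) (e' y)"
    proof (rule liftEC)
      show "e' x \<in> verts C" "e' y \<in> verts C" using e'p l by auto
      show "edge D (d (e' x)) (d (e' y))" using e'p l cubesD(2)[OF e xy] by simp
      assume ne: "e' x \<noteq> e' y"
      then have "x \<noteq> y" by auto
      show "\<not> (levc (d (e' x)) = 0 \<and> levc (d (e' y)) = 0)"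
      proof
        assume "levc (d (e' x)) = 0 \<and> levc (d (e' y)) = 0"
        then have "levc (e x) = 0" "levc (e y) = 0" using e'p l by auto
        then show False using botc[OF l(1), of y] xy \<open>x \<noteq> y\<close> by auto
      qed
    qed
  qed (use e'p in \<open>auto simp: e'_def\<close>)
  then show ?thesis using e'p by blast
qed

lemma lift:
  assumes m: "m \<le> Suc p" and e: "e \<in> cubes D m"
  shows "(\<exists>e'\<in>cubes B m. \<forall>x. length x = m \<longrightarrow> c (e' x) = e x) \<or> (\<exists>e'\<in>cubes C m. \<forall>x. length x = m \<longrightarrow> d (e' x) = e x)"
proof -
  define \<phi> where "\<phi> x = levc (e x)" for x
  have lipa: "\<phi> x \<le> \<phi> y + 1" if "edge (cube_graph m) x y" for x y
    using levc_edge[OF cubesD(2)[OF e that]] by (simp add: \<phi>_def)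
  have sp: "\<phi> x \<le> \<phi> y + m" if "length x = m" "length y = m" for x y
    using spread[of m \<phi>, OF lipa that] by simp
  show ?thesis
  proof (cases "(\<forall>x. length x = m \<longrightarrow> \<phi> x \<le> mB) \<and> (1 \<le> q2 \<or> (\<exists>x0. length x0 = m \<and> \<phi> x0 < q1))")
    case True
    have "\<exists>e'\<in>cubes B m. \<forall>x. length x = m \<longrightarrow> c (e' x) = e x"
    proof (rule liftB_gen[OF e])
      fix x :: "bool list" assume "length x = m" then show "levc (e x) \<le> mB" using True by (simp add: \<phi>_def)
    next
      fix y y' :: "bool list" assume y: "length y = m" and yM: "levc (e y) = M"
      have "\<phi> y \<le> mB" using True y by simp
      then have q2: "q2 = 0" using yM by (simp add: \<phi>_def)
      then obtain x0 where x0: "length x0 = m" "\<phi> x0 < q1" using True by auto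
      have big: "\<phi> x0 + m \<le> \<phi> y" using x0 m yM q2 by (simp add: \<phi>_def)
      have "1 \<le> m" using sp[OF y x0(1)] x0 yM q2 by (simp add: \<phi>_def)
      moreover have "edge (cube_graph m) y y' \<longrightarrow> y' \<noteq> y \<longrightarrow> levc (e y') < M"
        using corner_top[of m \<phi>, OF lipa y x0(1) big] yM by (simp add: \<phi>_def)
      ultimately show "1 \<le> m \<and> (edge (cube_graph m) y y' \<longrightarrow> y' \<noteq> y \<longrightarrow> levc (e y') < M)" by blast
    qed
    then show ?thesis by blast
  next
    case False
    then have F: "(\<exists>x1. length x1 = m \<and> mB < \<phi> x1) \<or> (q2 = 0 \<and> (\<forall>x. length x = m \<longrightarrow> q1 \<le> \<phi> x))"
      by (auto simp: not_le)
    have "\<exists>e'\<in>cubes C m. \<forall>x. length x = m \<longrightarrow> d (e' x) = e x"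
    proof (rule liftC_gen[OF e])
      fix x :: "bool list" assume x: "length x = m"
      from F show "q1 \<le> levc (e x)"
      proof
        assume "\<exists>x1. length x1 = m \<and> mB < \<phi> x1"
        then obtain x1 where "length x1 = m" "mB < \<phi> x1" by blast
        then show ?thesis using sp[of x1 x] x m by (simp add: \<phi>_def)
      next
        assume "q2 = 0 \<and> (\<forall>x. length x = m \<longrightarrow> q1 \<le> \<phi> x)"
        then have "q1 \<le> \<phi> x" using x by blast
        then show ?thesis unfolding \<phi>_def .
      qed
    next
      fix y y' :: "bool list" assume y: "length y = m" and y0: "levc (e y) = 0"
      from F show "1 \<le> m \<and> (edge (cube_graph m) y y' \<longrightarrow> y' \<noteq> y \<longrightarrow> 0 < levc (e y'))"
      proof
        assume "\<exists>x1. length x1 = m \<and> mB < \<phi> x1"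
        then obtain x1 where x1: "length x1 = m" "mB < \<phi> x1" by blast
        have big: "\<phi> y + m \<le> \<phi> x1" using x1 m y0 by (simp add: \<phi>_def)
        have "1 \<le> m" using sp[OF x1(1) y] x1 y0 by (simp add: \<phi>_def)
        moreover have "edge (cube_graph m) y y' \<longrightarrow> y' \<noteq> y \<longrightarrow> 0 < levc (e y')"
          using corner_bot[of m \<phi>, OF lipa y x1(1) big] y0 by (simp add: \<phi>_def)
        ultimately show ?thesis by blast
      next
        assume "q2 = 0 \<and> (\<forall>x. length x = m \<longrightarrow> q1 \<le> \<phi> x)"
        then have "1 \<le> \<phi> y" using h3 y by fastforce
        then show ?thesis using y0 by (simp add: \<phi>_def)
      qed
    qed
    then show ?thesis by blast
  qed
qed

end

context sq
begin

lemma pbraw: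
  assumes zr: "zr \<in> VB" and wr: "wr \<in> VC" and k: "kD (cr zr) = kD (dr wr)"
  shows "\<exists>v t. v \<in> verts G \<and> t \<le> p \<and> kD (Inr (Inl (v, t + q1))) = kD (dr wr)"
proof (cases wr rule: cyl3_exhaust)
  case (L v)
  then show ?thesis using wr by (intro exI[of _ v] exI[of _ 0]) (simp add: dr_def)
next
  case (M v t)
  show ?thesis
  proof (cases "t \<le> p")
    case True
    then show ?thesis using wr M by (intro exI[of _ v] exI[of _ t]) (simp add: dr_def)
  next
    case False
    have "levD (cr zr) = levD (dr wr)" using levD_key[OF cr_V[OF zr] dr_V[OF wr] k] .
    moreover have "levD (cr zr) \<le> mB" using cr_lev[OF zr] .
    moreover have "levD (dr wr) = t + q1" using M by (simp add: dr_def levD_def)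
    ultimately show ?thesis using False by simp
  qed
next
  case (R k')
  have kk: "kD (dr wr) = Inr (Inr k')" using R by (simp add: dr_def keyD_def)
  show ?thesis
  proof (cases zr rule: cyl3_exhaust)
    case (L h)
    then show ?thesis using k kk by (simp add: cr_def keyD_def)
  next
    case (M v t)
    have v: "v \<in> verts G" "t \<le> mB" using zr M by auto
    have "kD (Inr (Inl (v, t))) = Inr (Inr k')" using k kk M by (simp add: cr_def)
    then have "t = M" "g v = k'" using M1 by (auto simp: keyD_def split: if_splits)
    then have pq: "p + q1 = M" using v by simp
    then have "p + q1 \<noteq> 0" using M1 by linarith
    then have "kD (Inr (Inl (v, p + q1))) = Inr (Inr (g v))" using pq unfolding keyD_def by simp
    then show ?thesis using v kk \<open>g v = k'\<close> by (intro exI[of _ v] exI[of _ p]) simp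
  next
    case (R v)
    have v: "v \<in> verts G" using zr R by auto
    have "kD (Inr (Inl (v, mB))) = Inr (Inr k')" using k kk R by (simp add: cr_def)
    then have "mB = M" "g v = k'" using M1 by (auto simp: keyD_def split: if_splits)
    moreover have "p + q1 \<noteq> 0" using M1 \<open>mB = M\<close> by linarith
    ultimately have "kD (Inr (Inl (v, p + q1))) = Inr (Inr (g v))" unfolding keyD_def by simp
    then show ?thesis using v kk \<open>g v = k'\<close> by (intro exI[of _ v] exI[of _ p]) simp
  qed
qed

lemma pbv:
  assumes z: "z \<in> verts B" and w: "w \<in> verts C" and eq: "c z = d w"
  shows "\<exists>x\<in>verts A. a x = z \<and> b x = w"
proof -
  obtain zr where zr: "zr \<in> VB" "z = clB zr" using z vertsB by auto
  obtain wr where wr: "wr \<in> VC" "w = clC wr" using w vertsC by auto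
  have "clD (cr zr) = clD (dr wr)" using eq zr wr c_cls d_cls by simp
  then have k: "kD (cr zr) = kD (dr wr)" using kcls_eq[OF cr_V[OF zr(1)] dr_V[OF wr(1)], of kD] by simp
  obtain v t where vt: "v \<in> verts G" "t \<le> p" "kD (Inr (Inl (v, t + q1))) = kD (dr wr)"
    using pbraw[OF zr(1) wr(1) k] by blast
  have u: "Inr (Inl (v, t + q1)) \<in> VB" using vt by simp
  have "kD (cr (Inr (Inl (v, t + q1)))) = kD (cr zr)" using vt k by (simp add: cr_def)
  then have "kB (Inr (Inl (v, t + q1))) = kB zr" using cr_key[OF u zr(1)] by simp
  then have "clB (Inr (Inl (v, t + q1))) = z" using kcls_eq[OF u zr(1), of kB] zr by simp
  moreover have u': "Inr (Inl (v, t)) \<in> VC" using vt by simp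
  have "kD (dr (Inr (Inl (v, t)))) = kD (dr wr)" using vt by (simp add: dr_def)
  then have "kC (Inr (Inl (v, t))) = kC wr" using dr_key[OF u' wr(1)] by simp
  then have "clC (Inr (Inl (v, t))) = w" using kcls_eq[OF u' wr(1), of kC] wr by simp
  ultimately show ?thesis using a_eq b_eq vt by (intro bexI[of _ "(v, t)"]) (auto simp: vertsA)
qed

lemma clsB_form:
  "y \<in> VB \<Longrightarrow> kB y = kB (Inr (Inl (v, s))) \<Longrightarrow> 1 \<le> s \<Longrightarrow> s \<le> mB \<Longrightarrow>
     y = Inr (Inl (v, s)) \<or> (s = mB \<and> y = Inr (Inr v))"
  by (cases y rule: cyl3_exhaust) (auto simp: keyB_def split: if_splits)

lemma clsC_form:
  "y \<in> VC \<Longrightarrow> kC y = kC (Inr (Inl (v, t))) \<Longrightarrow> t < mC \<Longrightarrow>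
     y = Inr (Inl (v, t)) \<or> (t = 0 \<and> y = Inl v)"
  by (cases y rule: cyl3_exhaust) (auto simp: keyC_def split: if_splits)

lemma pbe:
  assumes x1: "x1 \<in> verts A" and x2: "x2 \<in> verts A"
    and eB: "edge B (a x1) (a x2)" and eC: "edge C (b x1) (b x2)"
  shows "edge A x1 x2"
proof -
  obtain v1 t1 where 1: "x1 = (v1, t1)" "v1 \<in> verts G" "t1 \<le> p" using x1 by (auto simp: vertsA)
  obtain v2 t2 where 2: "x2 = (v2, t2)" "v2 \<in> verts G" "t2 \<le> p" using x2 by (auto simp: vertsA)
  show ?thesis
  proof (cases "1 \<le> q1")
    case True
    have "edge B (clB (Inr (Inl (v1, t1 + q1)))) (clB (Inr (Inl (v2, t2 + q1))))"
      using eB 1 2 a_eq by simp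
    then obtain y1 y2 where y: "y1 \<in> clB (Inr (Inl (v1, t1 + q1)))" "y2 \<in> clB (Inr (Inl (v2, t2 + q1)))" "edge PB y1 y2"
      unfolding edgeB by blast
    have f1: "y1 = Inr (Inl (v1, t1 + q1)) \<or> (t1 + q1 = mB \<and> y1 = Inr (Inr v1))"
      using clsB_form[of y1 v1 "t1 + q1"] y(1) True 1 by (simp add: kcls_def)
    have f2: "y2 = Inr (Inl (v2, t2 + q1)) \<or> (t2 + q1 = mB \<and> y2 = Inr (Inr v2))"
      using clsB_form[of y2 v2 "t2 + q1"] y(2) True 2 by (simp add: kcls_def)
    from f1 f2 y(3) 1 2 show ?thesis by (auto simp: edgeA)
  next
    case False
    then have q: "q1 = 0" "1 \<le> q2" using h3 by auto
    have "edge C (clC (Inr (Inl (v1, t1)))) (clC (Inr (Inl (v2, t2))))"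
      using eC 1 2 b_eq by simp
    then obtain y1 y2 where y: "y1 \<in> clC (Inr (Inl (v1, t1)))" "y2 \<in> clC (Inr (Inl (v2, t2)))" "edge PC y1 y2"
      unfolding edgeC by blast
    have f1: "y1 = Inr (Inl (v1, t1)) \<or> (t1 = 0 \<and> y1 = Inl v1)"
      using clsC_form[of y1 v1 t1] y(1) q 1 by (simp add: kcls_def)
    have f2: "y2 = Inr (Inl (v2, t2)) \<or> (t2 = 0 \<and> y2 = Inl v2)"
      using clsC_form[of y2 v2 t2] y(2) q 2 by (simp add: kcls_def)
    from f1 f2 y(3) 1 2 show ?thesis by (auto simp: edgeA)
  qed
qed

theorem main: "cyl_square G H K f g p q1 q2"
  unfolding cyl_square_def
  by (rule pushout_crit[OF am bm cm dm comm injc injd lift pbv pbe])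

end

theorem lemma2p18:
  fixes G :: "'g graph" and H :: "'h graph" and K :: "'k graph"
    and f :: "'g \<Rightarrow> 'h" and g :: "'g \<Rightarrow> 'k"
  assumes "is_graph G" and "is_graph H" and "is_graph K"
    and "graph_map G H f" and "graph_map G K g"
  shows "(\<forall>p q1 q2. 1 \<le> q1 \<longrightarrow> 1 \<le> q2 \<longrightarrow> cyl_square G H K f g p q1 q2)
       \<and> (inj_on f (verts G) \<longrightarrow> (\<forall>p q2. 1 \<le> q2 \<longrightarrow> cyl_square G H K f g p 0 q2))
       \<and> (inj_on g (verts G) \<longrightarrow> (\<forall>p q1. 1 \<le> q1 \<longrightarrow> cyl_square G H K f g p q1 0))"
proof (intro conjI allI impI)
  fix p q1 q2 :: nat assume "1 \<le> q1" "1 \<le> q2"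
  then interpret sq G H K f g p q1 q2 using assms by unfold_locales auto
  show "cyl_square G H K f g p q1 q2" by (rule main)
next
  fix p q2 :: nat assume "inj_on f (verts G)" "1 \<le> q2"
  then interpret sq G H K f g p 0 q2 using assms by unfold_locales auto
  show "cyl_square G H K f g p 0 q2" by (rule main)
next
  fix p q1 :: nat assume "inj_on g (verts G)" "1 \<le> q1"
  then interpret sq G H K f g p q1 0 using assms by unfold_locales auto
  show "cyl_square G H K f g p q1 0" by (rule main)
qed


end
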